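(* Let $\lambda,\mu\in C^1([-1,1])$ be positive functions with $\lambda(w)=\mu(-w)$ for all $w\in[-1,1]$, and let $b,c\in C([-1,1])$. Let $E=\{(z,w)\in[-1,1]^2:\ |z|\le |w|\}$. Then the system $$\lambda(w)L^{11}_w(z,w)+\lambda(z)L^{11}_z(z,w)=-\lambda'(z)L^{11}(z,w)-c(z)L^{12}(z,w),$$ $$\lambda(w)L^{12}_w(z,w)-\mu(z)L^{12}_z(z,w)=-b(z)L^{11}(z,w)+\mu'(z)L^{12}(z,w),$$ $$L^{11}(-w,w)=0,\qquad L^{12}(w,w)=h_1(w):=\frac{b(w)}{\lambda(w)+\mu(w)},$$ together with the system $$\mu(w)L^{22}_w(z,w)+\mu(z)L^{22}_z(z,w)=b(z)L^{21}(z,w)-\mu'(z)L^{22}(z,w),$$ $$\mu(w)L^{21}_w(z,w)-\lambda(z)L^{21}_z(z,w)=\lambda'(z)L^{21}(z,w)+c(z)L^{22}(z,w),$$ $$L^{22}(-w,w)=0,\qquad L^{21}(w,w)=h_2(w):=-\frac{c(w)}{\lambda(w)+\mu(w)},$$ posed on $E$, has a unique solution $L^{11},L^{12},L^{21},L^{22}\in C(E)$ (understood as solutions of the equivalent integral equations obtained by integrating along characteristics).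
   Context: $E$ is the union of $E_1=\{(z,w):0\le w\le 1,\ -w\le z\le w\}$ and $E_2=\{(z,w):-1\le w\le 0,\ w\le z\le -w\}$. *)

theory Defs
  imports "HOL-Analysis.Analysis"
begin

definition E_dom :: "(real \<times> real) set" where
  "E_dom = {(z, w). 0 \<le> w \<and> w \<le> 1 \<and> -w \<le> z \<and> z \<le> w}
         \<union> {(z, w). -1 \<le> w \<and> w \<le> 0 \<and> w \<le> z \<and> z \<le> -w}"

text \<open>A characteristic curve (within E) of the first-order operator
  a(w) d/dw + beta(z) d/dz, parametrised on [s0, s1]:
  z'(s) = beta(z(s)), w'(s) = a(w(s)).\<close>

definition char_curve ::
  "(real \<Rightarrow> real) \<Rightarrow> (real \<Rightarrow> real) \<Rightarrow> real \<Rightarrow> real \<Rightarrow> (real \<Rightarrow> real \<times> real) \<Rightarrow> bool" where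
  "char_curve a beta s0 s1 \<gamma> \<longleftrightarrow> s0 \<le> s1 \<and>
     (\<forall>s\<in>{s0..s1}. \<gamma> s \<in> E_dom \<and>
        ((\<lambda>t. fst (\<gamma> t)) has_real_derivative beta (fst (\<gamma> s))) (at s within {s0..s1}) \<and>
        ((\<lambda>t. snd (\<gamma> t)) has_real_derivative a (snd (\<gamma> s))) (at s within {s0..s1}))"

text \<open>L solves a(w) L_w + beta(z) L_z = F(z,w) in the sense of integration
  along characteristics: along every characteristic curve segment in E,
  the increment of L equals the integral of F.\<close>

definition solves_char ::
  "(real \<Rightarrow> real) \<Rightarrow> (real \<Rightarrow> real) \<Rightarrow> (real \<times> real \<Rightarrow> real) \<Rightarrow> (real \<times> real \<Rightarrow> real) \<Rightarrow> bool" where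
  "solves_char a beta F L \<longleftrightarrow>
     (\<forall>s0 s1 \<gamma>. char_curve a beta s0 s1 \<gamma> \<longrightarrow>
        L (\<gamma> s1) - L (\<gamma> s0) = integral {s0..s1} (\<lambda>s. F (\<gamma> s)))"

definition kernel_system ::
  "(real \<Rightarrow> real) \<Rightarrow> (real \<Rightarrow> real) \<Rightarrow> (real \<Rightarrow> real) \<Rightarrow> (real \<Rightarrow> real) \<Rightarrow>
   (real \<Rightarrow> real) \<Rightarrow> (real \<Rightarrow> real) \<Rightarrow>
   (real \<times> real \<Rightarrow> real) \<Rightarrow> (real \<times> real \<Rightarrow> real) \<Rightarrow>
   (real \<times> real \<Rightarrow> real) \<Rightarrow> (real \<times> real \<Rightarrow> real) \<Rightarrow> bool" where
  "kernel_system lam lam' mu mu' b c L11 L12 L21 L22 \<longleftrightarrow>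
     continuous_on E_dom L11 \<and> continuous_on E_dom L12 \<and>
     continuous_on E_dom L21 \<and> continuous_on E_dom L22 \<and>
     solves_char lam lam
       (\<lambda>p. - lam' (fst p) * L11 p - c (fst p) * L12 p) L11 \<and>
     solves_char lam (\<lambda>z. - mu z)
       (\<lambda>p. - b (fst p) * L11 p + mu' (fst p) * L12 p) L12 \<and>
     (\<forall>w\<in>{-1..1}. L11 (-w, w) = 0 \<and> L12 (w, w) = b w / (lam w + mu w)) \<and>
     solves_char mu mu
       (\<lambda>p. b (fst p) * L21 p - mu' (fst p) * L22 p) L22 \<and>
     solves_char mu (\<lambda>z. - lam z)
       (\<lambda>p. lam' (fst p) * L21 p + c (fst p) * L22 p) L21 \<and>
     (\<forall>w\<in>{-1..1}. L22 (-w, w) = 0 \<and> L21 (w, w) = - c w / (lam w + mu w))"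

end

theory Submission
  imports Defs
begin

lemma pow_fact_lim: "(\<lambda>n. (x::real) ^ n / fact n) \<longlonglongrightarrow> 0"
  using summable_LIMSEQ_zero [OF summable_exp] by (auto simp add: inverse_eq_divide)

lemma picard_zero:
  fixes T :: "('a::topological_space \<Rightarrow> real\<times>real) \<Rightarrow> 'a \<Rightarrow> real\<times>real"
  assumes S: "compact S"
  and th: "\<And>p. p\<in>S \<Longrightarrow> 0 \<le> \<theta> p"
  and K: "0 \<le> K"
  and bnd: "\<And>u C n p. continuous_on S u \<Longrightarrow> 0 \<le> C \<Longrightarrow> (\<And>q. q\<in>S \<Longrightarrow> norm (u q) \<le> C * \<theta> q ^ n / fact n)
      \<Longrightarrow> p\<in>S \<Longrightarrow> norm (T u p) \<le> K * C * \<theta> p ^ Suc n / fact (Suc n)"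
  and d: "continuous_on S d" and dfix: "\<And>p. p\<in>S \<Longrightarrow> d p = T d p"
  and p: "p \<in> S"
  shows "d p = 0"
proof -
  have "bounded (d ` S)" using compact_imp_bounded[OF compact_continuous_image[OF d S]] .
  then obtain C0 where C0: "C0 > 0" "\<And>q. q\<in>S \<Longrightarrow> norm (d q) \<le> C0" by (auto simp: bounded_pos)
  have ind: "\<forall>q\<in>S. norm (d q) \<le> C0 * K^n * \<theta> q ^ n / fact n" for n
  proof (induction n)
    case 0 then show ?case using C0 by simp
  next
    case (Suc n)
    show ?case
    proof
      fix q assume q: "q \<in> S"
      have "norm (d q) = norm (T d q)" using dfix[OF q] by simp
      also have "\<dots> \<le> K * (C0 * K^n) * \<theta> q ^ Suc n / fact (Suc n)"
        using Suc q C0 K by (intro bnd[OF d]) auto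
      finally show "norm (d q) \<le> C0 * K ^ Suc n * \<theta> q ^ Suc n / fact (Suc n)"
        by (simp add: algebra_simps)
    qed
  qed
  have eq: "C0 * K^n * \<theta> p ^ n / fact n = C0 * ((K * \<theta> p) ^ n / fact n)" for n
    by (simp add: power_mult_distrib)
  have "(\<lambda>n. C0 * ((K * \<theta> p) ^ n / fact n)) \<longlonglongrightarrow> C0 * 0"
    by (intro tendsto_mult tendsto_const pow_fact_lim)
  moreover have "\<forall>n. norm (d p) \<le> C0 * ((K * \<theta> p) ^ n / fact n)"
    using ind p eq by metis
  ultimately have "norm (d p) \<le> C0 * 0"
    by (intro LIMSEQ_le_const[where X="\<lambda>n. C0 * ((K * \<theta> p) ^ n / fact n)"]) (auto simp del: mult_zero_right)
  thus ?thesis by simp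
qed

lemma picard:
  fixes T :: "('a::topological_space \<Rightarrow> real\<times>real) \<Rightarrow> 'a \<Rightarrow> real\<times>real"
  assumes S: "compact S"
  and th: "\<And>p. p\<in>S \<Longrightarrow> 0 \<le> \<theta> p \<and> \<theta> p \<le> \<Theta>"
  and K: "0 \<le> K"
  and lin: "\<And>u u' p. continuous_on S u \<Longrightarrow> continuous_on S u' \<Longrightarrow> p\<in>S \<Longrightarrow> T u p - T u' p = T (\<lambda>q. u q - u' q) p"
  and cont: "\<And>u. continuous_on S u \<Longrightarrow> continuous_on S (T u)"
  and bnd: "\<And>u C n p. continuous_on S u \<Longrightarrow> 0 \<le> C \<Longrightarrow> (\<And>q. q\<in>S \<Longrightarrow> norm (u q) \<le> C * \<theta> q ^ n / fact n)
      \<Longrightarrow> p\<in>S \<Longrightarrow> norm (T u p) \<le> K * C * \<theta> p ^ Suc n / fact (Suc n)"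
  and B: "continuous_on S B"
  shows "\<exists>u. continuous_on S u \<and> (\<forall>p\<in>S. u p = B p + T u p) \<and>
     (\<forall>u'. continuous_on S u' \<and> (\<forall>p\<in>S. u' p = B p + T u' p) \<longrightarrow> (\<forall>p\<in>S. u' p = u p))"
proof -
  define u where "u = rec_nat B (\<lambda>n v p. B p + T v p)"
  have u0: "u 0 = B" and uS: "u (Suc n) = (\<lambda>p. B p + T (u n) p)" for n
    by (simp_all add: u_def)
  have ucont: "continuous_on S (u n)" for n
    by (induction n) (auto simp: u0 uS B cont intro!: continuous_on_add)
  define dd where "dd n = (\<lambda>p. u (Suc n) p - u n p)" for n
  have ddcont: "continuous_on S (dd n)" for n
    unfolding dd_def by (intro continuous_on_diff ucont)
  have ddS: "dd (Suc n) p = T (dd n) p" if "p \<in> S" for n p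
    using lin[OF ucont ucont that, of "Suc n" n] by (simp add: dd_def uS)
  have "bounded (T B ` S)" using compact_imp_bounded[OF compact_continuous_image[OF cont[OF B] S]] .
  then obtain C0 where C0: "C0 > 0" "\<And>q. q\<in>S \<Longrightarrow> norm (T B q) \<le> C0" by (auto simp: bounded_pos)
  have dd0: "dd 0 p = T B p" for p by (simp add: dd_def uS u0)
  have ind: "\<forall>q\<in>S. norm (dd n q) \<le> C0 * K^n * \<theta> q ^ n / fact n" for n
  proof (induction n)
    case 0 then show ?case using C0 dd0 by simp
  next
    case (Suc n)
    show ?case
    proof
      fix q assume q: "q \<in> S"
      have "norm (dd (Suc n) q) = norm (T (dd n) q)" using ddS[OF q] by simp
      also have "\<dots> \<le> K * (C0 * K^n) * \<theta> q ^ Suc n / fact (Suc n)"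
        using Suc q C0 K by (intro bnd[OF ddcont]) auto
      finally show "norm (dd (Suc n) q) \<le> C0 * K ^ Suc n * \<theta> q ^ Suc n / fact (Suc n)"
        by (simp add: algebra_simps)
    qed
  qed
  define M where "M n = C0 * ((K * \<Theta>) ^ n / fact n)" for n
  have Mb: "norm (dd n q) \<le> M n" if "q \<in> S" for n q
  proof -
    have "C0 * K^n * \<theta> q ^ n / fact n = C0 * ((K * \<theta> q) ^ n / fact n)"
      by (simp add: power_mult_distrib)
    also have "\<dots> \<le> M n" unfolding M_def using th[OF that] K C0
      by (intro mult_left_mono divide_right_mono power_mono mult_left_mono) auto
    finally show ?thesis using ind that by (meson order_trans)
  qed
  have summM: "summable M" unfolding M_def
    using summable_exp[of "K * \<Theta>"] by (intro summable_mult) (simp add: inverse_eq_divide)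
  have ul: "uniform_limit S (\<lambda>n x. \<Sum>i<n. dd i x) (\<lambda>x. suminf (\<lambda>i. dd i x)) sequentially"
    by (rule Weierstrass_m_test[OF Mb summM])
  have sumc: "continuous_on S (\<lambda>x. suminf (\<lambda>i. dd i x))"
    by (rule uniform_limit_theorem[OF _ ul]) (auto intro!: always_eventually continuous_on_sum ddcont)
  define U where "U x = B x + suminf (\<lambda>i. dd i x)" for x
  have Ucont: "continuous_on S U" unfolding U_def by (intro continuous_on_add B sumc)
  have utel: "u n p = B p + (\<Sum>i<n. dd i p)" for n p
    by (induction n) (auto simp: u0 dd_def)
  have ulim: "(\<lambda>n. u n p) \<longlonglongrightarrow> U p" if "p \<in> S" for p
  proof -
    have "summable (\<lambda>i. norm (dd i p))"
      by (rule summable_comparison_test'[OF summM, of 0]) (use Mb[OF that] in auto)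
    hence "summable (\<lambda>i. dd i p)" by (rule summable_norm_cancel)
    hence "(\<lambda>n. \<Sum>i<n. dd i p) \<longlonglongrightarrow> suminf (\<lambda>i. dd i p)"
      by (simp add: summable_LIMSEQ)
    hence "(\<lambda>n. B p + (\<Sum>i<n. dd i p)) \<longlonglongrightarrow> U p" unfolding U_def by (intro tendsto_add tendsto_const)
    thus ?thesis by (simp add: utel)
  qed
  have Tlim: "(\<lambda>n. T (u n) p) \<longlonglongrightarrow> T U p" if p: "p \<in> S" for p
  proof (rule tendstoI)
    fix e :: real assume e: "e > 0"
    define e' where "e' = e / (K * \<Theta> + 1)"
    have KT: "0 \<le> K * \<Theta>" using th[OF p] K by auto
    have e': "e' > 0" unfolding e'_def using e KT by auto
    have "\<forall>\<^sub>F n in sequentially. \<forall>x\<in>S. dist (\<Sum>i<n. dd i x) (suminf (\<lambda>i. dd i x)) < e'"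
      using ul e' unfolding uniform_limit_iff by blast
    thus "\<forall>\<^sub>F n in sequentially. dist (T (u n) p) (T U p) < e"
    proof eventually_elim
      case (elim n)
      have un: "norm (u n q - U q) \<le> e'" if "q \<in> S" for q
        using elim that by (simp add: utel U_def dist_norm less_imp_le)
      have "dist (T (u n) p) (T U p) = norm (T (\<lambda>q. u n q - U q) p)"
        by (simp add: dist_norm lin[OF ucont Ucont p])
      also have "\<dots> \<le> K * e' * \<theta> p ^ Suc 0 / fact (Suc 0)"
        by (rule bnd) (use un e' p in \<open>auto intro: continuous_on_diff ucont Ucont\<close>)
      also have "\<dots> \<le> K * e' * \<Theta>" using th[OF p] K e' by (simp add: mult_left_mono)
      also have "\<dots> < e" unfolding e'_def using e KT by (simp add: field_simps)
      finally show ?case .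
    qed
  qed
  have Ufix: "U p = B p + T U p" if p: "p \<in> S" for p
  proof -
    have "(\<lambda>n. u (Suc n) p) \<longlonglongrightarrow> U p" using ulim[OF p] by (rule LIMSEQ_Suc)
    moreover have "(\<lambda>n. u (Suc n) p) \<longlonglongrightarrow> B p + T U p"
      unfolding uS by (intro tendsto_add tendsto_const Tlim p)
    ultimately show ?thesis by (rule LIMSEQ_unique)
  qed
  show ?thesis
  proof (intro exI conjI allI impI ballI)
    show "continuous_on S U" by (rule Ucont)
    show "U p = B p + T U p" if "p \<in> S" for p using Ufix that .
    fix u' p assume h: "continuous_on S u' \<and> (\<forall>p\<in>S. u' p = B p + T u' p)" and p: "p \<in> S"
    have "(\<lambda>q. u' q - U q) p = 0"
    proof (rule picard_zero[where T=T and \<theta>=\<theta> and K=K and S=S])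
      show "continuous_on S (\<lambda>q. u' q - U q)" using h Ucont by (intro continuous_on_diff) auto
      show "compact S" "0 \<le> K" "p \<in> S" by fact+
      show "norm (T u p) \<le> K * C * \<theta> p ^ Suc n / fact (Suc n)"
        if "continuous_on S u" "0 \<le> C" "\<And>q. q\<in>S \<Longrightarrow> norm (u q) \<le> C * \<theta> q ^ n / fact n" "p\<in>S"
        for u C n p using bnd[OF that] .
      fix q assume q: "q \<in> S"
      show "0 \<le> \<theta> q" using th[OF q] by simp
      show "u' q - U q = T (\<lambda>q. u' q - U q) q"
        using h q Ufix[OF q] lin[OF _ Ucont q, of u'] by (auto simp: algebra_simps)
    qed
    thus "u' p = U p" by simp
  qed
qed


lemma inv_props:
  fixes f :: "real \<Rightarrow> real"
  assumes cont: "\<And>x. isCont f x" and gr: "\<And>a b. a \<le> b \<Longrightarrow> c*(b-a) \<le> f b - f a" and c: "c > 0"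
  shows inv_bij: "bij f" and inv_fi: "f (inv f y) = y" and inv_if: "inv f (f x) = x"
    and inv_cont: "isCont (inv f) y" and inv_less: "a < b \<Longrightarrow> inv f a < inv f b"
    and inv_le: "a \<le> b \<Longrightarrow> inv f a \<le> inv f b"
    and f_less: "a < b \<Longrightarrow> f a < f b" and f_le: "a \<le> b \<Longrightarrow> f a \<le> f b"
proof -
  have fl: "f a < f b" if "a < b" for a b using gr[of a b] that c
    by (smt (verit) mult_pos_pos)
  thus "a < b \<Longrightarrow> f a < f b" .
  have fle: "f a \<le> f b" if "a \<le> b" for a b using fl[of a b] that by (cases "a = b") auto
  thus "a \<le> b \<Longrightarrow> f a \<le> f b" .
  have inj: "inj f"
    by (rule injI) (metis fl less_irrefl linorder_neqE_linordered_idom)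
  have surj: "surj f"
  proof -
    { fix y
      define b0 where "b0 = (\<bar>y\<bar> + \<bar>f 0\<bar>) / c"
      have b0: "b0 \<ge> 0" unfolding b0_def using c by auto
      have "c * (b0 - 0) \<le> f b0 - f 0" by (rule gr) (use b0 in auto)
      hence h1: "y \<le> f b0" unfolding b0_def using c by auto
      have "c * (0 - (-b0)) \<le> f 0 - f (-b0)" by (rule gr) (use b0 in auto)
      hence h2: "f (-b0) \<le> y" unfolding b0_def using c by auto
      have "\<exists>x. -b0 \<le> x \<and> x \<le> b0 \<and> f x = y"
        by (rule IVT[of f "-b0" y b0, OF h2 h1]) (use b0 cont in auto)
      hence "y \<in> range f" by auto }
    thus ?thesis by auto
  qed
  show "bij f" using inj surj by (simp add: bij_def)
  show fi: "f (inv f y) = y" for y using surj by (simp add: surj_f_inv_f)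
  show ifx: "inv f (f x) = x" for x using inj by simp
  show "isCont (inv f) y"
  proof -
    have "isCont (inv f) (f (inv f y))"
      by (rule isCont_inverse_function[where d=1]) (auto simp: ifx cont)
    thus ?thesis by (simp add: fi)
  qed
  show il: "inv f a < inv f b" if "a < b" for a b
  proof (rule ccontr)
    assume "\<not> inv f a < inv f b"
    hence "f (inv f b) \<le> f (inv f a)" by (intro fle) auto
    thus False using that by (simp add: fi)
  qed
  show "a \<le> b \<Longrightarrow> inv f a \<le> inv f b" using il by (cases "a = b") (auto simp: less_imp_le)
qed

definition sint :: "(real \<Rightarrow> real) \<Rightarrow> real \<Rightarrow> real" where
  "sint f t = integral {0..t} f - integral {t..0} f"

lemma sint_0[simp]: "sint f 0 = 0" by (simp add: sint_def)

lemma int_gt: "b < a \<Longrightarrow> integral {a..b::real} f = 0" by simp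

lemma sint_diff:
  assumes f: "continuous_on UNIV f" and ab: "a \<le> b"
  shows "sint f b - sint f a = integral {a..b} f"
proof -
  have I: "f integrable_on {x..y}" for x y by (rule integrable_continuous_real) (rule continuous_on_subset[OF f], auto)
  have comb: "integral {x..y} f + integral {y..z} f = integral {x..z} f" if "x \<le> y" "y \<le> z" for x y z
    by (rule Henstock_Kurzweil_Integration.integral_combine[OF that I])
  have z: "integral {x..x} f = 0" for x by simp
  consider "0 \<le> a" | "a \<le> 0" "0 \<le> b" | "b \<le> 0" using ab by linarith
  then show ?thesis
  proof cases
    case 1
    have "integral {b..0} f = 0" "integral {a..0} f = 0" using 1 ab
      by (cases "a = 0"; cases "b = 0"; simp)+
    then show ?thesis using comb[of 0 a b] 1 ab by (simp add: sint_def)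
  next
    case 2
    have "integral {b..0} f = 0" "integral {0..a} f = 0" using 2
      by (cases "a = 0"; cases "b = 0"; simp)+
    then show ?thesis using comb[of a 0 b] 2 by (simp add: sint_def)
  next
    case 3
    have "integral {0..b} f = 0" "integral {0..a} f = 0" using 3 ab
      by (cases "a = 0"; cases "b = 0"; simp)+
    then show ?thesis using comb[of a b 0] 3 ab by (simp add: sint_def)
  qed
qed

lemma int_scale_pos:
  fixes f :: "real \<Rightarrow> real" and t :: real
  assumes f: "continuous_on UNIV f" and t: "0 \<le> t"
  shows "integral {0..t} f = t * integral {0..1} (\<lambda>r. f (t * r))"
proof -
  have "((\<lambda>r. t *\<^sub>R f (t * r)) has_integral (integral {t * 0..t * 1} f)) {0..1}"
    by (rule has_integral_substitution[where c=0 and d=t])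
       (use t in \<open>auto intro!: derivative_eq_intros continuous_on_subset[OF f] mult_le_cancel_left1[THEN iffD2]
          simp: mult_le_one mult_left_le\<close>)
  hence "integral {0..1} (\<lambda>r. t * f (t * r)) = integral {0..t} f"
    by (simp add: has_integral_iff)
  thus ?thesis by simp
qed

lemma sint_scale:
  assumes f: "continuous_on UNIV f"
  shows "sint f t = t * integral {0..1} (\<lambda>r. f (t * r))"
proof (cases "0 \<le> t")
  case True
  have "integral {t..0} f = 0" using True by (cases "t = 0") auto
  then show ?thesis using int_scale_pos[OF f True] by (simp add: sint_def)
next
  case False
  have f': "continuous_on UNIV (\<lambda>x. f (-x))"
    by (rule continuous_on_compose2[OF f]) (auto intro!: continuous_intros)
  have "integral {t..0} f = integral {-0..-t} (\<lambda>x. f (-x))"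
    using Henstock_Kurzweil_Integration.integral_reflect_real[of 0 t f] by simp
  also have "\<dots> = (-t) * integral {0..1} (\<lambda>r. f (- (-t * r)))"
    using int_scale_pos[OF f', of "-t"] False by simp
  finally have "integral {t..0} f = - t * integral {0..1} (\<lambda>r. f (t * r))" by simp
  moreover have "integral {0..t} f = 0" using False by simp
  ultimately show ?thesis by (simp add: sint_def)
qed


definition clamp :: "real \<Rightarrow> real" where "clamp x = max (-1) (min 1 x)"

lemma clamp_in: "clamp x \<in> {-1..1}" by (auto simp: clamp_def)
lemma clamp_id: "x \<in> {-1..1} \<Longrightarrow> clamp x = x" by (auto simp: clamp_def)
lemma clamp_cont: "continuous_on UNIV clamp" unfolding clamp_def by (intro continuous_intros)

locale setting =
  fixes lam mu :: "real \<Rightarrow> real"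
  assumes pos: "\<forall>x\<in>{-1..1}. lam x > 0" and lcont: "continuous_on {-1..1} lam"
    and lm: "\<forall>w\<in>{-1..1}. lam w = mu (-w)"
begin

definition lamE where "lamE x = lam (clamp x)"
definition ig where "ig x = 1 / lamE x"
definition Phi where "Phi = sint ig"
definition Zf where "Zf = inv Phi"
definition kf where "kf v = Phi v - Phi (-v)"
definition kinv where "kinv = inv kf"

lemma lamE_cont: "continuous_on UNIV lamE"
  unfolding lamE_def
  by (rule continuous_on_compose2[OF lcont clamp_cont]) (auto simp: clamp_def)

lemma lamE_id: "x \<in> {-1..1} \<Longrightarrow> lamE x = lam x" by (simp add: lamE_def clamp_id)

lemma lam_bounds: obtains m M where "0 < m" "\<And>x. m \<le> lamE x" "\<And>x. lamE x \<le> M"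
proof -
  obtain x1 where x1: "x1 \<in> {-1..1}" "\<And>y. y \<in> {-1..1} \<Longrightarrow> lam x1 \<le> lam y"
    using continuous_attains_inf[OF compact_Icc _ lcont] by fastforce
  obtain x2 where x2: "x2 \<in> {-1..1}" "\<And>y. y \<in> {-1..1} \<Longrightarrow> lam y \<le> lam x2"
    using continuous_attains_sup[OF compact_Icc _ lcont] by fastforce
  show ?thesis
    by (rule that[of "lam x1" "lam x2"]) (use x1 x2 pos clamp_in in \<open>auto simp: lamE_def\<close>)
qed

lemma lamE_pos: "lamE x > 0"
proof -
  obtain m M where mM: "0 < m" "\<And>x. m \<le> lamE x" "\<And>x. lamE x \<le> M" using lam_bounds by blast
  thus ?thesis by (meson order_less_le_trans)
qed

lemma ig_cont: "continuous_on UNIV ig"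
  unfolding ig_def using lamE_pos by (intro continuous_intros lamE_cont) (auto simp: less_imp_neq[symmetric])

lemma ig_pos: "ig x > 0" using lamE_pos by (simp add: ig_def)

lemma Phi_0[simp]: "Phi 0 = 0" by (simp add: Phi_def)

lemma Phi_diff: "a \<le> b \<Longrightarrow> Phi b - Phi a = integral {a..b} ig"
  unfolding Phi_def by (rule sint_diff[OF ig_cont])

lemma ig_int: "ig integrable_on {a..b}"
  by (rule integrable_continuous_real) (rule continuous_on_subset[OF ig_cont], auto)

lemma ig_lower: obtains c where "c > 0" "\<And>x. c \<le> ig x"
proof -
  obtain m M where mM: "0 < m" "\<And>x. m \<le> lamE x" "\<And>x. lamE x \<le> M" using lam_bounds by blast
  have "M > 0" using mM by (meson order_less_le_trans)
  show ?thesis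
    by (rule that[of "1/M"]) (use mM \<open>M > 0\<close> lamE_pos in \<open>auto simp: ig_def intro!: divide_left_mono\<close>)
qed


lemma Phi_gr_ex: obtains c where "c > 0" "\<And>a b. a \<le> b \<Longrightarrow> c * (b - a) \<le> Phi b - Phi a"
proof -
  obtain c where c: "c > 0" "\<And>x. c \<le> ig x" using ig_lower by blast
  have "c * (b - a) \<le> Phi b - Phi a" if "a \<le> b" for a b
  proof -
    have "integral {a..b} (\<lambda>x. c) \<le> integral {a..b} ig"
      by (rule integral_le) (use c ig_int in auto)
    thus ?thesis using that by (simp add: Phi_diff mult.commute)
  qed
  thus ?thesis using that c by blast
qed

lemma Phi_deriv: "(Phi has_real_derivative ig x) (at x)"
proof -
  have c: "continuous_on {x-1..x+1} ig" by (rule continuous_on_subset[OF ig_cont]) simp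
  have x: "x \<in> {x-1..x+1}" by simp
  have d: "((\<lambda>y. integral {x-1..y} ig) has_real_derivative ig x) (at x within {x-1..x+1})"
    by (rule integral_has_real_derivative[OF c x])
  have "((\<lambda>y. integral {x-1..y} ig) has_real_derivative ig x) (at x within {x-1<..<x+1})"
    by (rule has_field_derivative_subset[OF d]) auto
  moreover have "at x within {x-1<..<x+1} = at x" by (rule at_within_open) auto
  ultimately have d2: "((\<lambda>y. integral {x-1..y} ig) has_real_derivative ig x) (at x)"
    by metis
  have d3: "((\<lambda>y. integral {x-1..y} ig + Phi (x-1)) has_real_derivative ig x + 0) (at x)"
    by (rule DERIV_add[OF d2 DERIV_const])
  show ?thesis
  proof (rule has_field_derivative_transform_within_open[of _ _ x "{x-1<..<x+1}"])
    show "((\<lambda>y. integral {x-1..y} ig + Phi (x-1)) has_real_derivative ig x) (at x)"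
      using d3 by (metis add_0_right)
    fix y assume "y \<in> {x-1<..<x+1}"
    hence "x - 1 \<le> y" by simp
    from Phi_diff[OF this] show "integral {x - 1..y} ig + Phi (x - 1) = Phi y" by linarith
  qed auto
qed

lemma Phi_cont: "isCont Phi x" using Phi_deriv by (rule DERIV_isCont)

lemma Phi_cont_on: "continuous_on S Phi" by (intro continuous_at_imp_continuous_on ballI Phi_cont)

lemma kf_gr_ex: obtains c where "c > 0" "\<And>a b. a \<le> b \<Longrightarrow> c * (b - a) \<le> kf b - kf a"
proof -
  obtain c where c: "c > 0" "\<And>a b. a \<le> b \<Longrightarrow> c * (b - a) \<le> Phi b - Phi a" using Phi_gr_ex by blast
  have "c * (b - a) \<le> kf b - kf a" if "a \<le> b" for a b
  proof -
    have "0 \<le> c * (b - a)" using that c(1) by simp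
    moreover have "c * (b - a) \<le> Phi (- a) - Phi (- b)" using c(2)[of "-b" "-a"] that by simp
    ultimately show ?thesis using c(2)[OF that] unfolding kf_def by linarith
  qed
  thus ?thesis using that c by blast
qed

lemma kf_cont: "isCont kf x"
proof -
  have "isCont (\<lambda>v. - v) x" by simp
  hence "isCont (\<lambda>v. Phi (-v)) x" using Phi_cont by (rule isCont_o2)
  thus ?thesis unfolding kf_def by (intro isCont_diff Phi_cont)
qed

lemma kf_0[simp]: "kf 0 = 0" by (simp add: kf_def)

lemma Phi_props:
  shows Phi_Zf: "Phi (Zf y) = y" and Zf_Phi: "Zf (Phi x) = x" and Zf_cont: "isCont Zf y"
    and Zf_less: "a < b \<Longrightarrow> Zf a < Zf b" and Zf_le: "a \<le> b \<Longrightarrow> Zf a \<le> Zf b"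
    and Phi_less: "a < b \<Longrightarrow> Phi a < Phi b" and Phi_le: "a \<le> b \<Longrightarrow> Phi a \<le> Phi b"
proof -
  obtain c where c: "c > 0" "\<And>a b. a \<le> b \<Longrightarrow> c * (b - a) \<le> Phi b - Phi a" using Phi_gr_ex by blast
  note * = inv_props[OF Phi_cont c(2) c(1), folded Zf_def]
  show "Phi (Zf y) = y" by (rule *(2))
  show "Zf (Phi x) = x" by (rule *(3))
  show "isCont Zf y" by (rule *(4))
  show "a < b \<Longrightarrow> Zf a < Zf b" by (rule *(5))
  show "a \<le> b \<Longrightarrow> Zf a \<le> Zf b" by (rule *(6))
  show "a < b \<Longrightarrow> Phi a < Phi b" by (rule *(7))
  show "a \<le> b \<Longrightarrow> Phi a \<le> Phi b" by (rule *(8))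
qed

lemma kf_props:
  shows kf_kinv: "kf (kinv y) = y" and kinv_kf: "kinv (kf x) = x" and kinv_cont: "isCont kinv y"
    and kinv_le: "a \<le> b \<Longrightarrow> kinv a \<le> kinv b"
    and kf_le: "a \<le> b \<Longrightarrow> kf a \<le> kf b"
proof -
  obtain c where c: "c > 0" "\<And>a b. a \<le> b \<Longrightarrow> c * (b - a) \<le> kf b - kf a" using kf_gr_ex by blast
  note * = inv_props[OF kf_cont c(2) c(1), folded kinv_def]
  show "kf (kinv y) = y" by (rule *(2))
  show "kinv (kf x) = x" by (rule *(3))
  show "isCont kinv y" by (rule *(4))
  show "a \<le> b \<Longrightarrow> kinv a \<le> kinv b" by (rule *(6))
  show "a \<le> b \<Longrightarrow> kf a \<le> kf b" by (rule *(8))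
qed

lemma Zf_deriv: "(Zf has_real_derivative lamE (Zf y)) (at y)"
proof -
  have "(Zf has_real_derivative inverse (ig (Zf y))) (at y)"
    by (rule DERIV_inverse_function[where f=Phi and a="y-1" and b="y+1"])
       (use Phi_deriv ig_pos[of "Zf y"] Phi_Zf Zf_cont in auto)
  thus ?thesis by (simp add: ig_def)
qed

lemma Zf_cont_on: "continuous_on S Zf" by (intro continuous_at_imp_continuous_on ballI Zf_cont)
lemma kinv_cont_on: "continuous_on S kinv" by (intro continuous_at_imp_continuous_on ballI kinv_cont)

end

definition Rf :: "real \<times> real \<Rightarrow> real \<times> real" where "Rf p = (- fst p, snd p)"
definition rho :: "real \<times> real \<Rightarrow> real \<times> real" where
  "rho p = (let w = clamp (snd p) in (max (- \<bar>w\<bar>) (min \<bar>w\<bar> (fst p)), w))"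

lemma E_iff: "p \<in> E_dom \<longleftrightarrow> \<bar>fst p\<bar> \<le> \<bar>snd p\<bar> \<and> \<bar>snd p\<bar> \<le> 1"
  by (cases p) (auto simp: E_dom_def)

lemma Rf_E: "Rf p \<in> E_dom \<longleftrightarrow> p \<in> E_dom" by (simp add: E_iff Rf_def)
lemma Rf_Rf[simp]: "Rf (Rf p) = p" by (simp add: Rf_def)
lemma Rf_cont: "continuous_on S Rf" unfolding Rf_def by (intro continuous_intros)

lemma clampab: "\<bar>max (- a) (min a x)\<bar> \<le> (a::real)" if "0 \<le> a" using that
  by (cases "x \<le> a"; cases "x \<le> -a") (auto simp: max_def min_def)

lemma rho_E: "rho p \<in> E_dom"
proof -
  have "\<bar>clamp (snd p)\<bar> \<le> 1" using clamp_in[of "snd p"] by auto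
  thus ?thesis unfolding E_iff rho_def Let_def using clampab[of "\<bar>clamp (snd p)\<bar>" "fst p"] by simp
qed
lemma rho_id: "p \<in> E_dom \<Longrightarrow> rho p = p"
  by (cases p) (auto simp: E_iff rho_def Let_def clamp_def)
lemma rho_cont: "continuous_on S rho"
  unfolding rho_def Let_def
  by (intro continuous_intros continuous_on_compose2[OF clamp_cont]) auto
lemma rho_snd: "snd (rho p) = clamp (snd p)" by (simp add: rho_def Let_def)

lemma E_compact: "compact E_dom"
proof -
  have "E_dom = {p. \<bar>fst p\<bar> \<le> \<bar>snd p\<bar>} \<inter> {p. \<bar>snd p\<bar> \<le> 1}" by (auto simp: E_iff)
  moreover have "closed ({p::real\<times>real. \<bar>fst p\<bar> \<le> \<bar>snd p\<bar>} \<inter> {p. \<bar>snd p\<bar> \<le> 1})"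
    by (intro closed_Int closed_Collect_le continuous_intros)
  moreover have "bounded E_dom"
  proof -
    have "E_dom \<subseteq> cball 0 2"
    proof
      fix p assume "p \<in> E_dom"
      hence "\<bar>fst p\<bar> \<le> 1" "\<bar>snd p\<bar> \<le> 1" by (auto simp: E_iff)
      hence "norm p \<le> 2" using norm_Pair_le[of "fst p" "snd p"] by simp
      thus "p \<in> cball 0 2" by simp
    qed
    thus ?thesis using bounded_cball bounded_subset by blast
  qed
  ultimately show ?thesis by (simp add: compact_eq_bounded_closed)
qed

context setting begin

definition Gm where "Gm v t = (Zf (Phi (-v) + t), Zf (Phi v + t))"
definition Hm where "Hm p = (let v = kinv (Phi (snd p) - Phi (fst p)) in (v, Phi (snd p) - Phi v))"

lemma HG[simp]: "Hm (Gm v t) = (v, t)"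
proof -
  have "Phi (Zf (Phi v + t)) - Phi (Zf (Phi (- v) + t)) = kf v" by (simp add: Phi_Zf kf_def)
  hence "kinv (Phi (Zf (Phi v + t)) - Phi (Zf (Phi (- v) + t))) = v" by (simp add: kinv_kf)
  thus ?thesis by (simp add: Hm_def Gm_def Let_def Phi_Zf)
qed

lemma GH: "Gm (fst (Hm p)) (snd (Hm p)) = p"
proof -
  obtain z w where p: "p = (z, w)" by (cases p)
  define v where "v = kinv (Phi w - Phi z)"
  have "kf v = Phi w - Phi z" unfolding v_def by (rule kf_kinv)
  hence "Phi v - Phi (-v) = Phi w - Phi z" by (simp add: kf_def)
  hence "Phi (- v) + (Phi w - Phi v) = Phi z" by linarith
  thus ?thesis by (simp add: p Hm_def Gm_def Let_def v_def[symmetric] Zf_Phi)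
qed

lemma Zf_ci[continuous_intros]: "continuous_on S f \<Longrightarrow> continuous_on S (\<lambda>x. Zf (f x))"
  by (rule continuous_on_compose2[OF Zf_cont_on]) auto
lemma Phi_ci[continuous_intros]: "continuous_on S f \<Longrightarrow> continuous_on S (\<lambda>x. Phi (f x))"
  by (rule continuous_on_compose2[OF Phi_cont_on]) auto
lemma kinv_ci[continuous_intros]: "continuous_on S f \<Longrightarrow> continuous_on S (\<lambda>x. kinv (f x))"
  by (rule continuous_on_compose2[OF kinv_cont_on]) auto

lemma Hm_cont: "continuous_on S Hm"
  unfolding Hm_def Let_def by (intro continuous_intros)

lemma Gm_ci[continuous_intros]:
  "continuous_on S f \<Longrightarrow> continuous_on S g \<Longrightarrow> continuous_on S (\<lambda>x. Gm (f x) (g x))"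
  unfolding Gm_def by (intro continuous_intros)

lemma Gm0: "Gm v 0 = (-v, v)" by (simp add: Gm_def Zf_Phi)

lemma Hm_anti: "Hm (-w, w) = (w, 0)" using HG[of w 0] by (simp add: Gm0)

lemma Phi_mono_iff: "Phi a \<le> Phi b \<longleftrightarrow> a \<le> b"
  using Phi_le Phi_less by (meson linorder_not_le)

lemma Zf_mono_iff: "Zf a \<le> Zf b \<longleftrightarrow> a \<le> b"
  using Zf_le Zf_less by (meson linorder_not_le)

lemma kinv_0[simp]: "kinv 0 = 0" using kinv_kf[of 0] by simp

lemma Hm_E:
  assumes p: "p \<in> E_dom"
  shows "(0 \<le> fst (Hm p) \<and> fst (Hm p) \<le> snd p \<and> 0 \<le> snd (Hm p)) \<or>
         (snd p \<le> fst (Hm p) \<and> fst (Hm p) \<le> 0 \<and> snd (Hm p) \<le> 0)"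
proof -
  obtain z w where pz: "p = (z, w)" by (cases p)
  define v where "v = kinv (Phi w - Phi z)"
  have H: "Hm (z, w) = (v, Phi w - Phi v)" by (simp add: Hm_def Let_def v_def)
  have zw: "\<bar>z\<bar> \<le> \<bar>w\<bar>" "\<bar>w\<bar> \<le> 1" using p by (auto simp: E_iff pz)
  show ?thesis
  proof (cases "0 \<le> w")
    case True
    have "Phi (-w) \<le> Phi z" "Phi z \<le> Phi w" using zw True by (auto simp: Phi_mono_iff)
    hence "0 \<le> Phi w - Phi z" "Phi w - Phi z \<le> kf w" by (auto simp: kf_def)
    hence "0 \<le> v" "v \<le> w" unfolding v_def using kinv_le[of 0 "Phi w - Phi z"] kinv_le[of "Phi w - Phi z" "kf w"]
      by (simp_all add: kinv_kf)
    thus ?thesis by (simp add: H pz Phi_mono_iff)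
  next
    case False
    have "Phi w \<le> Phi z" "Phi z \<le> Phi (-w)" using zw False by (auto simp: Phi_mono_iff)
    hence "Phi w - Phi z \<le> 0" "kf w \<le> Phi w - Phi z" by (auto simp: kf_def)
    hence "v \<le> 0" "w \<le> v" unfolding v_def using kinv_le[of "Phi w - Phi z" 0] kinv_le[of "kf w" "Phi w - Phi z"]
      by (simp_all add: kinv_kf)
    thus ?thesis by (simp add: H pz Phi_mono_iff)
  qed
qed

lemma Hm_E_v: "p \<in> E_dom \<Longrightarrow> fst (Hm p) \<in> {-1..1}"
  using Hm_E[of p] by (auto simp: E_iff)

lemma seg_E:
  assumes p: "p \<in> E_dom" and s: "s \<in> {min 0 (snd (Hm p))..max 0 (snd (Hm p))}"
  shows "Gm (fst (Hm p)) s \<in> E_dom"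
proof -
  define v where "v = fst (Hm p)"
  define t where "t = snd (Hm p)"
  have pG: "p = Gm v t" using GH[of p] by (simp add: v_def t_def)
  have w: "Zf (Phi v + t) = snd p" using pG by (simp add: Gm_def)
  have w1: "\<bar>snd p\<bar> \<le> 1" using p by (simp add: E_iff)
  have zs: "fst (Gm v s) = Zf (Phi (-v) + s)" "snd (Gm v s) = Zf (Phi v + s)" by (simp_all add: Gm_def)
  have "Gm v s \<in> E_dom"
  using Hm_E[OF p]
  proof
    assume h: "0 \<le> fst (Hm p) \<and> fst (Hm p) \<le> snd p \<and> 0 \<le> snd (Hm p)"
    hence v: "0 \<le> v" "0 \<le> t" "0 \<le> s" "s \<le> t" using s by (auto simp: v_def t_def)
    have a: "v \<le> Zf (Phi v + s)" using Zf_le[of "Phi v" "Phi v + s"] v by (simp add: Zf_Phi)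
    have b: "Zf (Phi v + s) \<le> snd p" using Zf_le[of "Phi v + s" "Phi v + t"] v w by simp
    have c: "-v \<le> Zf (Phi (-v) + s)" using Zf_le[of "Phi (-v)" "Phi (-v) + s"] v by (simp add: Zf_Phi)
    have d: "Zf (Phi (-v) + s) \<le> Zf (Phi v + s)" using v by (simp add: Zf_mono_iff Phi_mono_iff)
    show ?thesis unfolding E_iff zs using a b c d v w1 by auto
  next
    assume h: "snd p \<le> fst (Hm p) \<and> fst (Hm p) \<le> 0 \<and> snd (Hm p) \<le> 0"
    hence v: "v \<le> 0" "t \<le> 0" "s \<le> 0" "t \<le> s" using s by (auto simp: v_def t_def)
    have a: "Zf (Phi v + s) \<le> v" using Zf_le[of "Phi v + s" "Phi v"] v by (simp add: Zf_Phi)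
    have b: "snd p \<le> Zf (Phi v + s)" using Zf_le[of "Phi v + t" "Phi v + s"] v w by simp
    have c: "Zf (Phi (-v) + s) \<le> -v" using Zf_le[of "Phi (-v) + s" "Phi (-v)"] v by (simp add: Zf_Phi)
    have d: "Zf (Phi v + s) \<le> Zf (Phi (-v) + s)" using v by (simp add: Zf_mono_iff Phi_mono_iff)
    show ?thesis unfolding E_iff zs using a b c d v w1 by auto
  qed
  thus ?thesis by (simp add: v_def)
qed

end

context setting begin

lemma curve_coord:
  assumes d: "\<forall>s\<in>{s0..s1}. (f has_real_derivative lam (f s)) (at s within {s0..s1})"
    and inn: "\<forall>s\<in>{s0..s1}. f s \<in> {-1..1}" and s: "s \<in> {s0..s1}"
  shows "Phi (f s) = Phi (f s0) + (s - s0)"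
proof -
  have der: "((\<lambda>s. Phi (f s) - s) has_field_derivative 0) (at x within {s0..s1})" if x: "x \<in> {s0..s1}" for x
  proof -
    have "((\<lambda>s. Phi (f s)) has_field_derivative ig (f x) * lam (f x)) (at x within {s0..s1})"
      by (rule DERIV_chain'[OF d[rule_format, OF x] Phi_deriv])
    moreover have "ig (f x) * lam (f x) = 1"
      using inn x lamE_id[of "f x"] lamE_pos[of "f x"] by (simp add: ig_def)
    ultimately have "((\<lambda>s. Phi (f s)) has_field_derivative 1) (at x within {s0..s1})" by simp
    from DERIV_diff[OF this DERIV_ident] show ?thesis by simp
  qed
  obtain c where c: "\<forall>x\<in>{s0..s1}. Phi (f x) - x = c"
    using has_field_derivative_zero_constant[OF convex_real_interval(5) der] by blast
  have "s0 \<in> {s0..s1}" using s by simp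
  hence "Phi (f s) - s = c" "Phi (f s0) - s0 = c" using c s by auto
  thus ?thesis by linarith
qed

lemma curve_G:
  assumes cc: "char_curve lam lam s0 s1 \<gamma>" and s: "s \<in> {s0..s1}"
  shows "\<gamma> s = Gm (fst (Hm (\<gamma> s0))) (snd (Hm (\<gamma> s0)) + (s - s0))"
proof -
  define v where "v = fst (Hm (\<gamma> s0))"
  define t0 where "t0 = snd (Hm (\<gamma> s0))"
  have G0: "Gm v t0 = \<gamma> s0" using GH[of "\<gamma> s0"] by (simp add: v_def t0_def)
  have E: "\<forall>x\<in>{s0..s1}. \<gamma> x \<in> E_dom" using cc by (simp add: char_curve_def)
  have inz: "\<forall>x\<in>{s0..s1}. fst (\<gamma> x) \<in> {-1..1}" and inw: "\<forall>x\<in>{s0..s1}. snd (\<gamma> x) \<in> {-1..1}"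
    using E by (auto simp: E_iff)
  have dz: "\<forall>x\<in>{s0..s1}. ((\<lambda>t. fst (\<gamma> t)) has_real_derivative lam (fst (\<gamma> x))) (at x within {s0..s1})"
    and dw: "\<forall>x\<in>{s0..s1}. ((\<lambda>t. snd (\<gamma> t)) has_real_derivative lam (snd (\<gamma> x))) (at x within {s0..s1})"
    using cc by (simp_all add: char_curve_def)
  have cz: "Phi (fst (\<gamma> s)) = Phi (fst (\<gamma> s0)) + (s - s0)"
    by (rule curve_coord[OF dz inz s])
  have cw: "Phi (snd (\<gamma> s)) = Phi (snd (\<gamma> s0)) + (s - s0)"
    by (rule curve_coord[OF dw inw s])
  have z0: "Phi (fst (\<gamma> s0)) = Phi (-v) + t0" using arg_cong[OF G0, of "\<lambda>p. Phi (fst p)"]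
    by (simp add: Gm_def Phi_Zf)
  have w0: "Phi (snd (\<gamma> s0)) = Phi v + t0" using arg_cong[OF G0, of "\<lambda>p. Phi (snd p)"]
    by (simp add: Gm_def Phi_Zf)
  have "fst (\<gamma> s) = Zf (Phi (fst (\<gamma> s)))" by (simp add: Zf_Phi)
  also have "Phi (fst (\<gamma> s)) = Phi (-v) + (t0 + (s - s0))" using cz z0 by simp
  finally have 1: "fst (\<gamma> s) = fst (Gm v (t0 + (s - s0)))" by (simp add: Gm_def)
  have "snd (\<gamma> s) = Zf (Phi (snd (\<gamma> s)))" by (simp add: Zf_Phi)
  also have "Phi (snd (\<gamma> s)) = Phi v + (t0 + (s - s0))" using cw w0 by simp
  finally have 2: "snd (\<gamma> s) = snd (Gm v (t0 + (s - s0)))" by (simp add: Gm_def)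
  show ?thesis using 1 2 unfolding v_def[symmetric] t0_def[symmetric] by (simp add: prod_eq_iff)
qed

lemma Gm_fst_deriv: "((\<lambda>s. fst (Gm v s)) has_real_derivative lamE (fst (Gm v s))) (at s within S)"
proof -
  have "((\<lambda>s. Zf (Phi (-v) + s)) has_real_derivative lamE (Zf (Phi (-v) + s)) * 1) (at s)"
    by (rule DERIV_chain2[OF Zf_deriv]) (auto intro!: derivative_eq_intros)
  thus ?thesis by (simp add: Gm_def has_field_derivative_at_within)
qed

lemma Gm_snd_deriv: "((\<lambda>s. snd (Gm v s)) has_real_derivative lamE (snd (Gm v s))) (at s within S)"
proof -
  have "((\<lambda>s. Zf (Phi v + s)) has_real_derivative lamE (Zf (Phi v + s)) * 1) (at s)"
    by (rule DERIV_chain2[OF Zf_deriv]) (auto intro!: derivative_eq_intros)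
  thus ?thesis by (simp add: Gm_def has_field_derivative_at_within)
qed

lemma G_curve:
  assumes p: "p \<in> E_dom"
  shows "char_curve lam lam (min 0 (snd (Hm p))) (max 0 (snd (Hm p))) (\<lambda>s. Gm (fst (Hm p)) s)"
  unfolding char_curve_def
proof (intro conjI ballI)
  fix s assume s: "s \<in> {min 0 (snd (Hm p))..max 0 (snd (Hm p))}"
  have E: "Gm (fst (Hm p)) s \<in> E_dom" by (rule seg_E[OF p s])
  thus "Gm (fst (Hm p)) s \<in> E_dom" .
  have i: "fst (Gm (fst (Hm p)) s) \<in> {-1..1}" "snd (Gm (fst (Hm p)) s) \<in> {-1..1}" using E by (auto simp: E_iff)
  show "((\<lambda>t. fst (Gm (fst (Hm p)) t)) has_real_derivative lam (fst (Gm (fst (Hm p)) s)))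
     (at s within {min 0 (snd (Hm p))..max 0 (snd (Hm p))})"
    using Gm_fst_deriv[of "fst (Hm p)" s "{min 0 (snd (Hm p))..max 0 (snd (Hm p))}"] lamE_id[OF i(1)] by simp
  show "((\<lambda>t. snd (Gm (fst (Hm p)) t)) has_real_derivative lam (snd (Gm (fst (Hm p)) s)))
     (at s within {min 0 (snd (Hm p))..max 0 (snd (Hm p))})"
    using Gm_snd_deriv[of "fst (Hm p)" s "{min 0 (snd (Hm p))..max 0 (snd (Hm p))}"] lamE_id[OF i(2)] by simp
qed simp

lemma G_curve_R:
  assumes p: "p \<in> E_dom"
  shows "char_curve lam (\<lambda>z. - mu z) (min 0 (snd (Hm p))) (max 0 (snd (Hm p))) (\<lambda>s. Rf (Gm (fst (Hm p)) s))"
  unfolding char_curve_def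
proof (intro conjI ballI)
  fix s assume s: "s \<in> {min 0 (snd (Hm p))..max 0 (snd (Hm p))}"
  have E: "Gm (fst (Hm p)) s \<in> E_dom" by (rule seg_E[OF p s])
  thus "Rf (Gm (fst (Hm p)) s) \<in> E_dom" by (simp add: Rf_E)
  have i: "fst (Gm (fst (Hm p)) s) \<in> {-1..1}" "snd (Gm (fst (Hm p)) s) \<in> {-1..1}" using E by (auto simp: E_iff)
  have l: "lam (fst (Gm (fst (Hm p)) s)) = mu (fst (Rf (Gm (fst (Hm p)) s)))"
    using lm i(1) by (simp add: Rf_def)
  have "((\<lambda>t. - fst (Gm (fst (Hm p)) t)) has_real_derivative - lamE (fst (Gm (fst (Hm p)) s)))
     (at s within {min 0 (snd (Hm p))..max 0 (snd (Hm p))})"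
    by (rule DERIV_minus[OF Gm_fst_deriv[of "fst (Hm p)" s]])
  thus "((\<lambda>t. fst (Rf (Gm (fst (Hm p)) t))) has_real_derivative - mu (fst (Rf (Gm (fst (Hm p)) s))))
     (at s within {min 0 (snd (Hm p))..max 0 (snd (Hm p))})"
    using lamE_id[OF i(1)] l by (simp add: Rf_def)
  show "((\<lambda>t. snd (Rf (Gm (fst (Hm p)) t))) has_real_derivative lam (snd (Rf (Gm (fst (Hm p)) s))))
     (at s within {min 0 (snd (Hm p))..max 0 (snd (Hm p))})"
    using Gm_snd_deriv[of "fst (Hm p)" s "{min 0 (snd (Hm p))..max 0 (snd (Hm p))}"] lamE_id[OF i(2)] by (simp add: Rf_def)
qed simp

lemma curve_R:
  assumes cc: "char_curve lam (\<lambda>z. - mu z) s0 s1 \<gamma>"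
  shows "char_curve lam lam s0 s1 (\<lambda>s. Rf (\<gamma> s))"
  unfolding char_curve_def
proof (intro conjI ballI)
  show "s0 \<le> s1" using cc by (simp add: char_curve_def)
  fix s assume s: "s \<in> {s0..s1}"
  have E: "\<gamma> s \<in> E_dom"
    and dz: "((\<lambda>t. fst (\<gamma> t)) has_real_derivative - mu (fst (\<gamma> s))) (at s within {s0..s1})"
    and dw: "((\<lambda>t. snd (\<gamma> t)) has_real_derivative lam (snd (\<gamma> s))) (at s within {s0..s1})"
    using cc s by (auto simp: char_curve_def)
  show "Rf (\<gamma> s) \<in> E_dom" using E by (simp add: Rf_E)
  have i: "- fst (\<gamma> s) \<in> {-1..1}" using E by (auto simp: E_iff)
  have l: "lam (- fst (\<gamma> s)) = mu (fst (\<gamma> s))" using lm i by force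
  show "((\<lambda>t. fst (Rf (\<gamma> t))) has_real_derivative lam (fst (Rf (\<gamma> s)))) (at s within {s0..s1})"
    using DERIV_minus[OF dz] l by (simp add: Rf_def)
  show "((\<lambda>t. snd (Rf (\<gamma> t))) has_real_derivative lam (snd (Rf (\<gamma> s)))) (at s within {s0..s1})"
    using dw by (simp add: Rf_def)
qed

end

lemma cont_int: "continuous_on UNIV f \<Longrightarrow> (f::real\<Rightarrow>real) integrable_on {a..b}"
  by (rule integrable_continuous_real) (rule continuous_on_subset, auto)

lemma sint_sub:
  assumes "continuous_on UNIV f" "continuous_on UNIV g"
  shows "sint f t - sint g t = sint (\<lambda>s. f s - g s) t"
  using cont_int[OF assms(1)] cont_int[OF assms(2)]
  by (simp add: sint_def integral_diff)

lemma sint_bound: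
  assumes g: "continuous_on UNIV g" and P: "continuous_on UNIV P"
    and b: "\<And>s. s \<in> {min 0 t..max 0 t} \<Longrightarrow> \<bar>g s\<bar> \<le> P \<bar>s\<bar>"
  shows "\<bar>sint g t\<bar> \<le> integral {0..\<bar>t\<bar>} P"
proof -
  have Pa: "continuous_on UNIV (\<lambda>s. P \<bar>s\<bar>)"
    by (rule continuous_on_compose2[OF P]) (auto intro: continuous_intros)
  show ?thesis
  proof (cases "0 \<le> t")
    case True
    have "integral {t..0} g = 0" using True by (cases "t = 0") auto
    hence "\<bar>sint g t\<bar> = norm (integral {0..t} g)" by (simp add: sint_def)
    also have "\<dots> \<le> integral {0..t} (\<lambda>s. P \<bar>s\<bar>)"
      by (rule integral_norm_bound_integral[OF cont_int[OF g] cont_int[OF Pa]]) (use b True in auto)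
    also have "\<dots> = integral {0..t} P" by (rule integral_cong) auto
    finally show ?thesis using True by simp
  next
    case False
    have "integral {0..t} g = 0" using False by simp
    hence "\<bar>sint g t\<bar> = norm (integral {t..0} g)" by (simp add: sint_def)
    also have "\<dots> \<le> integral {t..0} (\<lambda>s. P \<bar>s\<bar>)"
      by (rule integral_norm_bound_integral[OF cont_int[OF g] cont_int[OF Pa]]) (use b False in auto)
    also have "\<dots> = integral {t..0} (\<lambda>s. P (- s))" by (rule integral_cong) auto
    also have "\<dots> = integral {0..-t} P"
      using Henstock_Kurzweil_Integration.integral_reflect_real[of "-t" 0 P] by simp
    finally show ?thesis using False by simp
  qed
qed

lemma pow_int:
  fixes a T :: real
  assumes T: "0 \<le> T"
  shows "integral {0..T} (\<lambda>r. (a + r) ^ n) = ((a + T) ^ Suc n - a ^ Suc n) / Suc n"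
proof -
  have "((\<lambda>r. (a + r) ^ n) has_integral ((a + T) ^ Suc n / Suc n - (a + 0) ^ Suc n / Suc n)) {0..T}"
  proof (rule fundamental_theorem_of_calculus[OF T])
    fix x assume "x \<in> {0..T}"
    have "((\<lambda>r. (a + r) ^ Suc n / Suc n) has_real_derivative (Suc n * (a + x) ^ n * 1) / Suc n) (at x within {0..T})"
      by (intro derivative_eq_intros) auto
    thus "((\<lambda>r. (a + r) ^ Suc n / Suc n) has_vector_derivative (a + x) ^ n) (at x within {0..T})"
      by (simp add: has_real_derivative_iff_has_vector_derivative[symmetric])
  qed
  thus ?thesis by (simp add: has_integral_iff diff_divide_distrib)
qed

lemma pow_int_bound:
  fixes a T D :: real
  assumes T: "0 \<le> T" and a: "0 \<le> a" and D: "0 \<le> D"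
  shows "integral {0..T} (\<lambda>r. D * (a + r) ^ n / fact n) \<le> D * (a + T) ^ Suc n / fact (Suc n)"
proof -
  have "integral {0..T} (\<lambda>r. D * (a + r) ^ n / fact n) = D / fact n * integral {0..T} (\<lambda>r. (a + r) ^ n)"
  proof -
    have "integral {0..T} (\<lambda>r. D * (a + r) ^ n / fact n) = integral {0..T} (\<lambda>r. (D / fact n) *\<^sub>R (a + r) ^ n)"
      by (rule integral_cong) simp
    thus ?thesis by (simp only: integral_cmul) simp
  qed
  also have "\<dots> = D / fact n * (((a + T) ^ Suc n - a ^ Suc n) / Suc n)" by (simp add: pow_int[OF T])
  also have "\<dots> \<le> D / fact n * ((a + T) ^ Suc n / Suc n)"
    using a D by (intro mult_left_mono divide_right_mono) auto
  also have "\<dots> = D * (a + T) ^ Suc n / fact (Suc n)" by (simp add: field_simps)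
  finally show ?thesis .
qed


definition fa :: "(real \<Rightarrow> real) \<Rightarrow> (real \<Rightarrow> real) \<Rightarrow> (real\<times>real \<Rightarrow> real\<times>real) \<Rightarrow> real\<times>real \<Rightarrow> real" where
  "fa \<alpha> \<beta> u q = \<alpha> (fst q) * fst (u q) + \<beta> (fst q) * snd (u q)"

lemma fst_E_cont:
  assumes "continuous_on {-1..1} \<alpha>"
  shows "continuous_on E_dom (\<lambda>q. \<alpha> (fst q))"
  by (rule continuous_on_compose2[OF assms continuous_on_fst[OF continuous_on_id]]) (auto simp: E_iff)

lemma fa_contE:
  assumes "continuous_on {-1..1} \<alpha>" "continuous_on {-1..1} \<beta>" "continuous_on E_dom u"
  shows "continuous_on E_dom (fa \<alpha> \<beta> u)"
  unfolding fa_def using fst_E_cont[OF assms(1)] fst_E_cont[OF assms(2)] assms(3)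
  by (intro continuous_intros) auto

lemma faR:
  assumes "continuous_on {-1..1} \<alpha>" "continuous_on {-1..1} \<beta>" "continuous_on E_dom u"
    and f: "continuous_on S f"
  shows "continuous_on S (\<lambda>x. fa \<alpha> \<beta> u (rho (f x)))"
  by (rule continuous_on_compose2[OF fa_contE[OF assms(1-3)], of _ "\<lambda>x. rho (f x)"])
     (auto intro: continuous_on_compose2[OF rho_cont f] simp: rho_E)

lemma fa_diff: "fa \<alpha> \<beta> u q - fa \<alpha> \<beta> u' q = fa \<alpha> \<beta> (\<lambda>q. u q - u' q) q"
  by (simp add: fa_def algebra_simps)

lemma fa_bound:
  assumes A: "\<bar>\<alpha> (fst q)\<bar> + \<bar>\<beta> (fst q)\<bar> \<le> A"
  shows "\<bar>fa \<alpha> \<beta> u q\<bar> \<le> A * norm (u q)"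
proof -
  have a: "\<bar>fst (u q)\<bar> \<le> norm (u q)" "\<bar>snd (u q)\<bar> \<le> norm (u q)"
    using norm_fst_le[of "fst (u q)" "snd (u q)"] norm_snd_le[of "snd (u q)" "fst (u q)"] by auto
  have "\<bar>fa \<alpha> \<beta> u q\<bar> \<le> \<bar>\<alpha> (fst q)\<bar> * \<bar>fst (u q)\<bar> + \<bar>\<beta> (fst q)\<bar> * \<bar>snd (u q)\<bar>"
    unfolding fa_def by (metis abs_mult abs_triangle_ineq)
  also have "\<dots> \<le> \<bar>\<alpha> (fst q)\<bar> * norm (u q) + \<bar>\<beta> (fst q)\<bar> * norm (u q)"
    using a by (intro add_mono mult_left_mono) auto
  also have "\<dots> \<le> A * norm (u q)" using A by (metis distrib_right mult_right_mono norm_ge_zero)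
  finally show ?thesis .
qed

lemma sint_param_cont:
  fixes GG :: "'a::topological_space \<times> real \<Rightarrow> real" and tf :: "'a \<Rightarrow> real"
  assumes GG: "continuous_on UNIV GG" and tf: "continuous_on UNIV tf"
  shows "continuous_on UNIV (\<lambda>x. sint (\<lambda>s. GG (x, s)) (tf x))"
proof -
  have c1: "continuous_on UNIV (\<lambda>s. GG (x, s))" for x
    by (rule continuous_on_compose2[OF GG]) (auto intro: continuous_intros)
  have eq: "sint (\<lambda>s. GG (x, s)) (tf x) = tf x * integral (cbox 0 1) (\<lambda>r. GG (x, tf x * r))" for x
    using sint_scale[OF c1] by simp
  have c2: "continuous_on (UNIV \<times> cbox 0 1) (\<lambda>(x, r). GG (x, tf x * r))"
  proof -
    have "continuous_on (UNIV \<times> cbox 0 1) (\<lambda>y. GG (fst y, tf (fst y) * snd y))"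
      by (rule continuous_on_compose2[OF GG])
         (auto intro!: continuous_intros continuous_on_compose2[OF tf])
    thus ?thesis by (simp add: case_prod_beta)
  qed
  have "continuous_on UNIV (\<lambda>x. integral (cbox 0 1) (\<lambda>r. GG (x, tf x * r)))"
    using integral_continuous_on_param[OF c2] by simp
  hence "continuous_on UNIV (\<lambda>x. tf x * integral (cbox 0 1) (\<lambda>r. GG (x, tf x * r)))"
    by (intro continuous_intros tf)
  thus ?thesis by (simp add: eq)
qed

context setting begin

definition T0 where
  "T0 \<alpha>1 \<beta>1 \<alpha>2 \<beta>2 u p =
    (sint (\<lambda>s. fa \<alpha>1 \<beta>1 u (rho (Gm (fst (Hm p)) s))) (snd (Hm p)),
     sint (\<lambda>s. fa \<alpha>2 \<beta>2 u (rho (Rf (Gm (fst (Hm (Rf p))) s)))) (snd (Hm (Rf p))))"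

definition Bd where "Bd h p = (0::real, h (clamp (fst (Hm (Rf p)))))"

definition theta where "theta p = \<bar>Phi (snd p)\<bar>"

lemma Hm_ci[continuous_intros]: "continuous_on S f \<Longrightarrow> continuous_on S (\<lambda>x. Hm (f x))"
  by (rule continuous_on_compose2[OF Hm_cont]) auto
lemma Rf_ci[continuous_intros]: "continuous_on S f \<Longrightarrow> continuous_on S (\<lambda>x. Rf (f x))"
  by (rule continuous_on_compose2[OF Rf_cont]) auto

lemma T0_cont:
  assumes "continuous_on {-1..1} \<alpha>1" "continuous_on {-1..1} \<beta>1"
    "continuous_on {-1..1} \<alpha>2" "continuous_on {-1..1} \<beta>2" and u: "continuous_on E_dom u"
  shows "continuous_on S (T0 \<alpha>1 \<beta>1 \<alpha>2 \<beta>2 u)"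
proof -
  have 1: "continuous_on UNIV (\<lambda>p. sint (\<lambda>s. fa \<alpha>1 \<beta>1 u (rho (Gm (fst (Hm (fst (p, s)))) (snd (p, s))))) (snd (Hm p)))"
    by (rule sint_param_cont[where GG="\<lambda>x. fa \<alpha>1 \<beta>1 u (rho (Gm (fst (Hm (fst x))) (snd x)))"])
       (intro faR assms continuous_intros)+
  have 2: "continuous_on UNIV (\<lambda>p. sint (\<lambda>s. fa \<alpha>2 \<beta>2 u (rho (Rf (Gm (fst (Hm (Rf (fst (p, s))))) (snd (p, s)))))) (snd (Hm (Rf p))))"
    by (rule sint_param_cont[where GG="\<lambda>x. fa \<alpha>2 \<beta>2 u (rho (Rf (Gm (fst (Hm (Rf (fst x)))) (snd x))))"])
       (intro faR assms continuous_intros)+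
  have "continuous_on UNIV (T0 \<alpha>1 \<beta>1 \<alpha>2 \<beta>2 u)"
    unfolding T0_def using 1 2 by (intro continuous_on_Pair) auto
  thus ?thesis by (rule continuous_on_subset) auto
qed

lemma T0_lin:
  assumes "continuous_on {-1..1} \<alpha>1" "continuous_on {-1..1} \<beta>1"
    "continuous_on {-1..1} \<alpha>2" "continuous_on {-1..1} \<beta>2"
    and u: "continuous_on E_dom u" and u': "continuous_on E_dom u'"
  shows "T0 \<alpha>1 \<beta>1 \<alpha>2 \<beta>2 u p - T0 \<alpha>1 \<beta>1 \<alpha>2 \<beta>2 u' p = T0 \<alpha>1 \<beta>1 \<alpha>2 \<beta>2 (\<lambda>q. u q - u' q) p"
proof -
  have c: "continuous_on UNIV (\<lambda>s. fa \<alpha> \<beta> w (rho (f s)))"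
    if "continuous_on {-1..1} \<alpha>" "continuous_on {-1..1} \<beta>" "continuous_on E_dom w" "continuous_on UNIV f"
    for \<alpha> \<beta> w and f :: "real \<Rightarrow> real \<times> real"
    by (rule faR[OF that])
  show ?thesis unfolding T0_def
    by (simp add: sint_sub[OF c[OF assms(1,2) u] c[OF assms(1,2) u']]
        sint_sub[OF c[OF assms(3,4) u] c[OF assms(3,4) u']] fa_diff continuous_intros)
qed

lemma theta_rho: "theta (rho q) \<le> theta q"
proof -
  have "\<bar>Phi (clamp x)\<bar> \<le> \<bar>Phi x\<bar>" for x
  proof -
    consider "1 < x" | "x < -1" | "x \<in> {-1..1}" by force
    thus ?thesis
    proof cases
      case 1
      hence "clamp x = 1" by (simp add: clamp_def)
      moreover have "Phi 1 \<le> Phi x" "0 \<le> Phi 1" using 1 Phi_le[of 1 x] Phi_le[of 0 1] by auto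
      ultimately show ?thesis by simp
    next
      case 2
      hence "clamp x = -1" by (simp add: clamp_def)
      moreover have "Phi x \<le> Phi (-1)" "Phi (-1) \<le> 0" using 2 Phi_le[of x "-1"] Phi_le[of "-1" 0] by auto
      ultimately show ?thesis by simp
    qed (simp add: clamp_id)
  qed
  thus ?thesis by (simp add: theta_def rho_snd)
qed

lemma theta_Rf[simp]: "theta (Rf q) = theta q" by (simp add: theta_def Rf_def)
lemma theta_G: "theta (Gm v s) = \<bar>Phi v + s\<bar>" by (simp add: theta_def Gm_def Phi_Zf)
lemma theta_nn: "0 \<le> theta q" by (simp add: theta_def)

lemma comp_bound:
  assumes p: "p \<in> E_dom" and g: "continuous_on UNIV g" and D: "0 \<le> D"
    and gb: "\<And>s. \<bar>g s\<bar> \<le> D * theta (Gm (fst (Hm p)) s) ^ n / fact n"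
  shows "\<bar>sint g (snd (Hm p))\<bar> \<le> D * theta p ^ Suc n / fact (Suc n)"
proof -
  define v where "v = fst (Hm p)"
  define t where "t = snd (Hm p)"
  define a where "a = \<bar>Phi v\<bar>"
  have pG: "p = Gm v t" using GH[of p] by (simp add: v_def t_def)
  have sg: "(0 \<le> Phi v \<and> 0 \<le> t) \<or> (Phi v \<le> 0 \<and> t \<le> 0)"
    using Hm_E[OF p] Phi_le[of 0 v] Phi_le[of v 0] by (auto simp: v_def t_def)
  have th: "theta (Gm v s) = a + \<bar>s\<bar>" if "s \<in> {min 0 t..max 0 t}" for s
    using sg that by (auto simp: theta_G a_def)
  define P where "P r = D * (a + r) ^ n / fact n" for r
  have Pc: "continuous_on UNIV P" unfolding P_def by (intro continuous_intros) auto
  have "\<bar>sint g t\<bar> \<le> integral {0..\<bar>t\<bar>} P"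
  proof (rule sint_bound[OF g Pc])
    fix s assume s: "s \<in> {min 0 t..max 0 t}"
    show "\<bar>g s\<bar> \<le> P \<bar>s\<bar>" using gb[of s] th[OF s] by (simp add: P_def v_def)
  qed
  also have "\<dots> \<le> D * (a + \<bar>t\<bar>) ^ Suc n / fact (Suc n)" unfolding P_def
    by (rule pow_int_bound) (auto simp: a_def D)
  also have "a + \<bar>t\<bar> = theta p" using th[of t] pG by simp
  finally show ?thesis by (simp add: t_def)
qed

lemma T0_bound:
  assumes A1: "\<And>z. z \<in> {-1..1} \<Longrightarrow> \<bar>\<alpha>1 z\<bar> + \<bar>\<beta>1 z\<bar> \<le> A"
    and A2: "\<And>z. z \<in> {-1..1} \<Longrightarrow> \<bar>\<alpha>2 z\<bar> + \<bar>\<beta>2 z\<bar> \<le> A" and A: "0 \<le> A"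
    and cs: "continuous_on {-1..1} \<alpha>1" "continuous_on {-1..1} \<beta>1"
    "continuous_on {-1..1} \<alpha>2" "continuous_on {-1..1} \<beta>2"
    and u: "continuous_on E_dom u" and C: "0 \<le> C"
    and ub: "\<And>q. q \<in> E_dom \<Longrightarrow> norm (u q) \<le> C * theta q ^ n / fact n"
    and p: "p \<in> E_dom"
  shows "norm (T0 \<alpha>1 \<beta>1 \<alpha>2 \<beta>2 u p) \<le> (2 * A) * C * theta p ^ Suc n / fact (Suc n)"
proof -
  have rb: "\<bar>fa \<alpha> \<beta> u (rho q)\<bar> \<le> (A * C) * theta q ^ n / fact n"
    if Ab: "\<And>z. z \<in> {-1..1} \<Longrightarrow> \<bar>\<alpha> z\<bar> + \<bar>\<beta> z\<bar> \<le> A" for \<alpha> \<beta> q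
  proof -
    have r: "rho q \<in> E_dom" by (rule rho_E)
    hence "fst (rho q) \<in> {-1..1}" by (auto simp: E_iff)
    hence "\<bar>fa \<alpha> \<beta> u (rho q)\<bar> \<le> A * norm (u (rho q))" by (intro fa_bound Ab)
    also have "\<dots> \<le> A * (C * theta (rho q) ^ n / fact n)" using ub[OF r] A by (rule mult_left_mono)
    also have "\<dots> \<le> A * (C * theta q ^ n / fact n)"
      using A C theta_rho[of q] theta_nn[of "rho q"]
      by (intro mult_left_mono divide_right_mono power_mono) auto
    finally show ?thesis by simp
  qed
  have D: "0 \<le> A * C" using A C by simp
  have g1c: "continuous_on UNIV (\<lambda>s. fa \<alpha>1 \<beta>1 u (rho (Gm (fst (Hm p)) s)))"
    by (intro faR cs u continuous_intros)
  have c1: "\<bar>fst (T0 \<alpha>1 \<beta>1 \<alpha>2 \<beta>2 u p)\<bar> \<le> (A * C) * theta p ^ Suc n / fact (Suc n)"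
    unfolding T0_def fst_conv
    by (rule comp_bound[OF p g1c D]) (rule rb[of \<alpha>1 \<beta>1, OF A1])
  have Rp: "Rf p \<in> E_dom" using p by (simp add: Rf_E)
  have g2c: "continuous_on UNIV (\<lambda>s. fa \<alpha>2 \<beta>2 u (rho (Rf (Gm (fst (Hm (Rf p))) s))))"
    by (intro faR cs u continuous_intros)
  have c2: "\<bar>snd (T0 \<alpha>1 \<beta>1 \<alpha>2 \<beta>2 u p)\<bar> \<le> (A * C) * theta (Rf p) ^ Suc n / fact (Suc n)"
    unfolding T0_def snd_conv
  proof (rule comp_bound[OF Rp g2c D])
    fix s show "\<bar>fa \<alpha>2 \<beta>2 u (rho (Rf (Gm (fst (Hm (Rf p))) s)))\<bar> \<le> A * C * theta (Gm (fst (Hm (Rf p))) s) ^ n / fact n"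
      using rb[of \<alpha>2 \<beta>2 "Rf (Gm (fst (Hm (Rf p))) s)", OF A2] by simp
  qed
  have "norm (T0 \<alpha>1 \<beta>1 \<alpha>2 \<beta>2 u p) \<le> \<bar>fst (T0 \<alpha>1 \<beta>1 \<alpha>2 \<beta>2 u p)\<bar> + \<bar>snd (T0 \<alpha>1 \<beta>1 \<alpha>2 \<beta>2 u p)\<bar>"
    using norm_Pair_le[of "fst (T0 \<alpha>1 \<beta>1 \<alpha>2 \<beta>2 u p)" "snd (T0 \<alpha>1 \<beta>1 \<alpha>2 \<beta>2 u p)"] by simp
  also have "\<dots> \<le> (A * C) * theta p ^ Suc n / fact (Suc n) + (A * C) * theta p ^ Suc n / fact (Suc n)"
    using add_mono[OF c1 c2[unfolded theta_Rf]] .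
  also have "\<dots> = (2 * A) * C * theta p ^ Suc n / fact (Suc n)" by (simp add: field_simps)
  finally show ?thesis .
qed

lemma theta_E: "p \<in> E_dom \<Longrightarrow> theta p \<le> \<bar>Phi 1\<bar> + \<bar>Phi (-1)\<bar>"
proof -
  assume p: "p \<in> E_dom"
  hence "Phi (snd p) \<le> Phi 1" "Phi (-1) \<le> Phi (snd p)" using Phi_le[of "snd p" 1] Phi_le[of "-1" "snd p"]
    by (auto simp: E_iff)
  moreover have "Phi (-1) \<le> 0" "0 \<le> Phi 1" using Phi_le[of 0 1] Phi_le[of "-1" 0] by auto
  ultimately show ?thesis unfolding theta_def by linarith
qed

lemma Bd_cont: "continuous_on {-1..1} h \<Longrightarrow> continuous_on S (Bd h)"
  unfolding Bd_def
  by (intro continuous_intros continuous_on_compose2[of "{-1..1}" h _ "\<lambda>p. clamp (fst (Hm (Rf p)))"]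
        continuous_on_compose2[OF clamp_cont]) (auto simp: clamp_def)

end

lemma sint_curve:
  assumes "X (max 0 t) - X (min 0 t) = integral {min 0 t..max 0 t} g"
  shows "X t = X 0 + sint g t"
proof (cases "0 \<le> t")
  case True
  have "integral {t..0} g = 0" using True by (cases "t = 0") auto
  thus ?thesis using assms True by (simp add: sint_def max_def min_def)
next
  case False
  have "integral {0..t} g = 0" using False by simp
  thus ?thesis using assms False by (simp add: sint_def max_def min_def)
qed

context setting begin

definition sysP where
  "sysP \<alpha>1 \<beta>1 \<alpha>2 \<beta>2 h L1 L2 \<longleftrightarrow> continuous_on E_dom L1 \<and> continuous_on E_dom L2 \<and>
     solves_char lam lam (\<lambda>p. \<alpha>1 (fst p) * L1 p + \<beta>1 (fst p) * L2 p) L1 \<and>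
     solves_char lam (\<lambda>z. - mu z) (\<lambda>p. \<alpha>2 (fst p) * L1 p + \<beta>2 (fst p) * L2 p) L2 \<and>
     (\<forall>w\<in>{-1..1}. L1 (-w, w) = 0 \<and> L2 (w, w) = h w)"

lemma sys_fix:
  assumes cs: "continuous_on {-1..1} \<alpha>1" "continuous_on {-1..1} \<beta>1"
    "continuous_on {-1..1} \<alpha>2" "continuous_on {-1..1} \<beta>2"
    and S: "sysP \<alpha>1 \<beta>1 \<alpha>2 \<beta>2 h M1 M2" and p: "p \<in> E_dom"
  shows "(M1 p, M2 p) = Bd h p + T0 \<alpha>1 \<beta>1 \<alpha>2 \<beta>2 (\<lambda>q. (M1 q, M2 q)) p"
proof -
  define m where "m = (\<lambda>q. (M1 q, M2 q))"
  have sc1: "solves_char lam lam (\<lambda>p. \<alpha>1 (fst p) * M1 p + \<beta>1 (fst p) * M2 p) M1"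
    and sc2: "solves_char lam (\<lambda>z. - mu z) (\<lambda>p. \<alpha>2 (fst p) * M1 p + \<beta>2 (fst p) * M2 p) M2"
    and bd: "\<forall>w\<in>{-1..1}. M1 (-w, w) = 0 \<and> M2 (w, w) = h w"
    using S by (simp_all add: sysP_def)
  define v where "v = fst (Hm p)"
  define t where "t = snd (Hm p)"
  have pG: "Gm v t = p" using GH[of p] by (simp add: v_def t_def)
  have v1: "v \<in> {-1..1}" using Hm_E_v[OF p] by (simp add: v_def)
  have cc: "char_curve lam lam (min 0 t) (max 0 t) (\<lambda>s. Gm v s)"
    using G_curve[OF p] by (simp add: v_def t_def)
  have "M1 (Gm v (max 0 t)) - M1 (Gm v (min 0 t)) =
      integral {min 0 t..max 0 t} (\<lambda>s. \<alpha>1 (fst (Gm v s)) * M1 (Gm v s) + \<beta>1 (fst (Gm v s)) * M2 (Gm v s))"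
    using sc1 cc unfolding solves_char_def by blast
  also have "\<dots> = integral {min 0 t..max 0 t} (\<lambda>s. fa \<alpha>1 \<beta>1 m (rho (Gm v s)))"
  proof (rule integral_cong)
    fix s assume "s \<in> {min 0 t..max 0 t}"
    hence "Gm v s \<in> E_dom" using seg_E[OF p] by (simp add: v_def t_def)
    thus "\<alpha>1 (fst (Gm v s)) * M1 (Gm v s) + \<beta>1 (fst (Gm v s)) * M2 (Gm v s) = fa \<alpha>1 \<beta>1 m (rho (Gm v s))"
      by (simp add: rho_id fa_def m_def)
  qed
  finally have "M1 (Gm v t) = M1 (Gm v 0) + sint (\<lambda>s. fa \<alpha>1 \<beta>1 m (rho (Gm v s))) t"
    by (rule sint_curve[where X="\<lambda>s. M1 (Gm v s)"])
  hence e1: "M1 p = sint (\<lambda>s. fa \<alpha>1 \<beta>1 m (rho (Gm v s))) t"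
    using bd v1 by (simp add: pG Gm0)
  have Rp: "Rf p \<in> E_dom" using p by (simp add: Rf_E)
  define v' where "v' = fst (Hm (Rf p))"
  define t' where "t' = snd (Hm (Rf p))"
  have pG': "Rf (Gm v' t') = p" using GH[of "Rf p"] by (simp add: v'_def t'_def)
  have v1': "v' \<in> {-1..1}" using Hm_E_v[OF Rp] by (simp add: v'_def)
  have cc': "char_curve lam (\<lambda>z. - mu z) (min 0 t') (max 0 t') (\<lambda>s. Rf (Gm v' s))"
    using G_curve_R[OF Rp] by (simp add: v'_def t'_def)
  have "M2 (Rf (Gm v' (max 0 t'))) - M2 (Rf (Gm v' (min 0 t'))) =
      integral {min 0 t'..max 0 t'} (\<lambda>s. \<alpha>2 (fst (Rf (Gm v' s))) * M1 (Rf (Gm v' s)) + \<beta>2 (fst (Rf (Gm v' s))) * M2 (Rf (Gm v' s)))"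
    using sc2 cc' unfolding solves_char_def by blast
  also have "\<dots> = integral {min 0 t'..max 0 t'} (\<lambda>s. fa \<alpha>2 \<beta>2 m (rho (Rf (Gm v' s))))"
  proof (rule integral_cong)
    fix s assume "s \<in> {min 0 t'..max 0 t'}"
    hence "Gm v' s \<in> E_dom" using seg_E[OF Rp] by (simp add: v'_def t'_def)
    hence "Rf (Gm v' s) \<in> E_dom" by (simp add: Rf_E)
    thus "\<alpha>2 (fst (Rf (Gm v' s))) * M1 (Rf (Gm v' s)) + \<beta>2 (fst (Rf (Gm v' s))) * M2 (Rf (Gm v' s)) =
        fa \<alpha>2 \<beta>2 m (rho (Rf (Gm v' s)))"
      by (simp add: rho_id fa_def m_def)
  qed
  finally have "M2 (Rf (Gm v' t')) = M2 (Rf (Gm v' 0)) + sint (\<lambda>s. fa \<alpha>2 \<beta>2 m (rho (Rf (Gm v' s)))) t'"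
    by (rule sint_curve[where X="\<lambda>s. M2 (Rf (Gm v' s))"])
  have e2: "M2 p = h v' + sint (\<lambda>s. fa \<alpha>2 \<beta>2 m (rho (Rf (Gm v' s)))) t'"
  proof -
    have "Rf (Gm v' 0) = (v', v')" by (simp add: Gm0 Rf_def)
    thus ?thesis using \<open>M2 (Rf (Gm v' t')) = _\<close> bd v1' by (simp add: pG')
  qed
  show ?thesis
    unfolding m_def[symmetric] using e1 e2 v1'
    by (simp add: T0_def Bd_def v_def t_def v'_def t'_def clamp_id)
qed

end

context setting begin

lemma fix_sys:
  assumes cs: "continuous_on {-1..1} \<alpha>1" "continuous_on {-1..1} \<beta>1"
    "continuous_on {-1..1} \<alpha>2" "continuous_on {-1..1} \<beta>2"
    and u: "continuous_on E_dom u"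
    and fx: "\<forall>p\<in>E_dom. u p = Bd h p + T0 \<alpha>1 \<beta>1 \<alpha>2 \<beta>2 u p"
  shows "sysP \<alpha>1 \<beta>1 \<alpha>2 \<beta>2 h (\<lambda>p. fst (u p)) (\<lambda>p. snd (u p))"
  unfolding sysP_def
proof (intro conjI)
  show "continuous_on E_dom (\<lambda>p. fst (u p))" "continuous_on E_dom (\<lambda>p. snd (u p))"
    using u by (auto intro: continuous_intros)
  have F1: "fst (u p) = sint (\<lambda>s. fa \<alpha>1 \<beta>1 u (rho (Gm (fst (Hm p)) s))) (snd (Hm p))" if "p \<in> E_dom" for p
    using fx that by (simp add: T0_def Bd_def prod_eq_iff)
  have F2: "snd (u p) = h (clamp (fst (Hm (Rf p)))) + sint (\<lambda>s. fa \<alpha>2 \<beta>2 u (rho (Rf (Gm (fst (Hm (Rf p))) s)))) (snd (Hm (Rf p)))"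
    if "p \<in> E_dom" for p
    using fx that by (simp add: T0_def Bd_def prod_eq_iff)
  show "solves_char lam lam (\<lambda>p. \<alpha>1 (fst p) * fst (u p) + \<beta>1 (fst p) * snd (u p)) (\<lambda>p. fst (u p))"
    unfolding solves_char_def
  proof (intro allI impI)
    fix s0 s1 \<gamma> assume cc: "char_curve lam lam s0 s1 \<gamma>"
    define v where "v = fst (Hm (\<gamma> s0))"
    define t0 where "t0 = snd (Hm (\<gamma> s0))"
    define g where "g = (\<lambda>s. fa \<alpha>1 \<beta>1 u (rho (Gm v s)))"
    have gc: "continuous_on UNIV g" unfolding g_def by (intro faR cs u continuous_intros)
    have s01: "s0 \<le> s1" using cc by (simp add: char_curve_def)
    have gam: "\<gamma> s = Gm v (t0 + (s - s0))" if "s \<in> {s0..s1}" for s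
      using curve_G[OF cc that] by (simp add: v_def t0_def)
    have gE: "\<gamma> s \<in> E_dom" if "s \<in> {s0..s1}" for s using cc that by (simp add: char_curve_def)
    have val: "fst (u (\<gamma> s)) = sint g (t0 + (s - s0))" if "s \<in> {s0..s1}" for s
      using F1[OF gE[OF that]] gam[OF that] by (simp add: g_def)
    have "fst (u (\<gamma> s1)) - fst (u (\<gamma> s0)) = sint g (t0 + (s1 - s0)) - sint g (t0 + (s0 - s0))"
      using val[of s1] val[of s0] s01 by simp
    also have "\<dots> = integral {t0..t0 + (s1 - s0)} g" using sint_diff[OF gc] s01 by simp
    also have "\<dots> = integral {s0..s1} (\<lambda>x. g (x + (t0 - s0)))"
      using integral_shift_real_ivl[of t0 "t0 - s0" "t0 + (s1 - s0)" g] by simp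
    also have "\<dots> = integral {s0..s1} (\<lambda>s. \<alpha>1 (fst (\<gamma> s)) * fst (u (\<gamma> s)) + \<beta>1 (fst (\<gamma> s)) * snd (u (\<gamma> s)))"
    proof (rule integral_cong)
      fix s assume s: "s \<in> {s0..s1}"
      have "g (s + (t0 - s0)) = fa \<alpha>1 \<beta>1 u (rho (\<gamma> s))" using gam[OF s] by (simp add: g_def algebra_simps)
      thus "g (s + (t0 - s0)) = \<alpha>1 (fst (\<gamma> s)) * fst (u (\<gamma> s)) + \<beta>1 (fst (\<gamma> s)) * snd (u (\<gamma> s))"
        using rho_id[OF gE[OF s]] by (simp add: fa_def)
    qed
    finally show "fst (u (\<gamma> s1)) - fst (u (\<gamma> s0)) =
        integral {s0..s1} (\<lambda>s. \<alpha>1 (fst (\<gamma> s)) * fst (u (\<gamma> s)) + \<beta>1 (fst (\<gamma> s)) * snd (u (\<gamma> s)))" .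
  qed
  show "solves_char lam (\<lambda>z. - mu z) (\<lambda>p. \<alpha>2 (fst p) * fst (u p) + \<beta>2 (fst p) * snd (u p)) (\<lambda>p. snd (u p))"
    unfolding solves_char_def
  proof (intro allI impI)
    fix s0 s1 \<gamma> assume cc0: "char_curve lam (\<lambda>z. - mu z) s0 s1 \<gamma>"
    have cc: "char_curve lam lam s0 s1 (\<lambda>s. Rf (\<gamma> s))" by (rule curve_R[OF cc0])
    define v where "v = fst (Hm (Rf (\<gamma> s0)))"
    define t0 where "t0 = snd (Hm (Rf (\<gamma> s0)))"
    define g where "g = (\<lambda>s. fa \<alpha>2 \<beta>2 u (rho (Rf (Gm v s))))"
    have gc: "continuous_on UNIV g" unfolding g_def by (intro faR cs u continuous_intros)
    have s01: "s0 \<le> s1" using cc by (simp add: char_curve_def)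
    have gam: "Rf (\<gamma> s) = Gm v (t0 + (s - s0))" if "s \<in> {s0..s1}" for s
      using curve_G[OF cc that] by (simp add: v_def t0_def)
    have gE: "\<gamma> s \<in> E_dom" if "s \<in> {s0..s1}" for s using cc0 that by (simp add: char_curve_def)
    have val: "snd (u (\<gamma> s)) = h (clamp v) + sint g (t0 + (s - s0))" if "s \<in> {s0..s1}" for s
      using F2[OF gE[OF that]] gam[OF that] by (simp add: g_def)
    have "snd (u (\<gamma> s1)) - snd (u (\<gamma> s0)) = sint g (t0 + (s1 - s0)) - sint g (t0 + (s0 - s0))"
      using val[of s1] val[of s0] s01 by simp
    also have "\<dots> = integral {t0..t0 + (s1 - s0)} g" using sint_diff[OF gc] s01 by simp
    also have "\<dots> = integral {s0..s1} (\<lambda>x. g (x + (t0 - s0)))"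
      using integral_shift_real_ivl[of t0 "t0 - s0" "t0 + (s1 - s0)" g] by simp
    also have "\<dots> = integral {s0..s1} (\<lambda>s. \<alpha>2 (fst (\<gamma> s)) * fst (u (\<gamma> s)) + \<beta>2 (fst (\<gamma> s)) * snd (u (\<gamma> s)))"
    proof (rule integral_cong)
      fix s assume s: "s \<in> {s0..s1}"
      have "Rf (Gm v (t0 + (s - s0))) = \<gamma> s" using arg_cong[OF gam[OF s], of Rf] by simp
      hence "g (s + (t0 - s0)) = fa \<alpha>2 \<beta>2 u (rho (\<gamma> s))" by (simp add: g_def algebra_simps)
      thus "g (s + (t0 - s0)) = \<alpha>2 (fst (\<gamma> s)) * fst (u (\<gamma> s)) + \<beta>2 (fst (\<gamma> s)) * snd (u (\<gamma> s))"
        using rho_id[OF gE[OF s]] by (simp add: fa_def)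
    qed
    finally show "snd (u (\<gamma> s1)) - snd (u (\<gamma> s0)) =
        integral {s0..s1} (\<lambda>s. \<alpha>2 (fst (\<gamma> s)) * fst (u (\<gamma> s)) + \<beta>2 (fst (\<gamma> s)) * snd (u (\<gamma> s)))" .
  qed
  show "\<forall>w\<in>{-1..1}. fst (u (-w, w)) = 0 \<and> snd (u (w, w)) = h w"
  proof
    fix w :: real assume w: "w \<in> {-1..1}"
    have E1: "(-w, w) \<in> E_dom" "(w, w) \<in> E_dom" using w by (auto simp: E_iff)
    have "fst (u (-w, w)) = 0" using F1[OF E1(1)] by (simp add: Hm_anti)
    moreover have "snd (u (w, w)) = h w" using F2[OF E1(2)] w by (simp add: Rf_def Hm_anti clamp_id)
    ultimately show "fst (u (-w, w)) = 0 \<and> snd (u (w, w)) = h w" ..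
  qed
qed

theorem sys_main:
  assumes cs: "continuous_on {-1..1} \<alpha>1" "continuous_on {-1..1} \<beta>1"
    "continuous_on {-1..1} \<alpha>2" "continuous_on {-1..1} \<beta>2" and hc: "continuous_on {-1..1} h"
  shows "\<exists>L1 L2. sysP \<alpha>1 \<beta>1 \<alpha>2 \<beta>2 h L1 L2 \<and>
     (\<forall>M1 M2. sysP \<alpha>1 \<beta>1 \<alpha>2 \<beta>2 h M1 M2 \<longrightarrow> (\<forall>p\<in>E_dom. M1 p = L1 p \<and> M2 p = L2 p))"
proof -
  have "continuous_on {-1..1} (\<lambda>z. \<bar>\<alpha>1 z\<bar> + \<bar>\<beta>1 z\<bar> + \<bar>\<alpha>2 z\<bar> + \<bar>\<beta>2 z\<bar>)"
    using cs by (intro continuous_intros)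
  hence "bounded ((\<lambda>z. \<bar>\<alpha>1 z\<bar> + \<bar>\<beta>1 z\<bar> + \<bar>\<alpha>2 z\<bar> + \<bar>\<beta>2 z\<bar>) ` {-1..1})"
    by (intro compact_imp_bounded compact_continuous_image compact_Icc)
  then obtain A where A: "A > 0" "\<And>z. z \<in> {-1..1} \<Longrightarrow> norm (\<bar>\<alpha>1 z\<bar> + \<bar>\<beta>1 z\<bar> + \<bar>\<alpha>2 z\<bar> + \<bar>\<beta>2 z\<bar>) \<le> A"
    by (auto simp: bounded_pos)
  have A1: "\<bar>\<alpha>1 z\<bar> + \<bar>\<beta>1 z\<bar> \<le> A" and A2: "\<bar>\<alpha>2 z\<bar> + \<bar>\<beta>2 z\<bar> \<le> A" if "z \<in> {-1..1}" for z
    using A(2)[OF that] by auto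
  have "\<exists>u. continuous_on E_dom u \<and> (\<forall>p\<in>E_dom. u p = Bd h p + T0 \<alpha>1 \<beta>1 \<alpha>2 \<beta>2 u p) \<and>
     (\<forall>u'. continuous_on E_dom u' \<and> (\<forall>p\<in>E_dom. u' p = Bd h p + T0 \<alpha>1 \<beta>1 \<alpha>2 \<beta>2 u' p) \<longrightarrow> (\<forall>p\<in>E_dom. u' p = u p))"
  proof (rule picard[where \<theta>=theta and \<Theta>="\<bar>Phi 1\<bar> + \<bar>Phi (-1)\<bar>" and K="2 * A"])
    show "compact E_dom" by (rule E_compact)
    show "\<And>p. p \<in> E_dom \<Longrightarrow> 0 \<le> theta p \<and> theta p \<le> \<bar>Phi 1\<bar> + \<bar>Phi (- 1)\<bar>"
      using theta_nn theta_E by auto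
    show "0 \<le> 2 * A" using A by simp
    show "\<And>u u' p. continuous_on E_dom u \<Longrightarrow> continuous_on E_dom u' \<Longrightarrow> p \<in> E_dom \<Longrightarrow>
      T0 \<alpha>1 \<beta>1 \<alpha>2 \<beta>2 u p - T0 \<alpha>1 \<beta>1 \<alpha>2 \<beta>2 u' p = T0 \<alpha>1 \<beta>1 \<alpha>2 \<beta>2 (\<lambda>q. u q - u' q) p"
      by (rule T0_lin[OF cs])
    show "\<And>u. continuous_on E_dom u \<Longrightarrow> continuous_on E_dom (T0 \<alpha>1 \<beta>1 \<alpha>2 \<beta>2 u)"
      by (rule T0_cont[OF cs])
    show "\<And>u C n p. continuous_on E_dom u \<Longrightarrow> 0 \<le> C \<Longrightarrow>
       (\<And>q. q \<in> E_dom \<Longrightarrow> norm (u q) \<le> C * theta q ^ n / fact n) \<Longrightarrow> p \<in> E_dom \<Longrightarrow>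
       norm (T0 \<alpha>1 \<beta>1 \<alpha>2 \<beta>2 u p) \<le> 2 * A * C * theta p ^ Suc n / fact (Suc n)"
      by (rule T0_bound[OF A1 A2 _ cs]) (use A in auto)
    show "continuous_on E_dom (Bd h)" by (rule Bd_cont[OF hc])
  qed
  then obtain u where u: "continuous_on E_dom u" "\<forall>p\<in>E_dom. u p = Bd h p + T0 \<alpha>1 \<beta>1 \<alpha>2 \<beta>2 u p"
    and un: "\<And>u'. continuous_on E_dom u' \<Longrightarrow> (\<forall>p\<in>E_dom. u' p = Bd h p + T0 \<alpha>1 \<beta>1 \<alpha>2 \<beta>2 u' p) \<Longrightarrow> (\<forall>p\<in>E_dom. u' p = u p)"
    by blast
  show ?thesis
  proof (intro exI conjI allI impI ballI)
    show "sysP \<alpha>1 \<beta>1 \<alpha>2 \<beta>2 h (\<lambda>p. fst (u p)) (\<lambda>p. snd (u p))" by (rule fix_sys[OF cs u])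
    fix M1 M2 p assume S: "sysP \<alpha>1 \<beta>1 \<alpha>2 \<beta>2 h M1 M2" and p: "p \<in> E_dom"
    have mc: "continuous_on E_dom (\<lambda>q. (M1 q, M2 q))" using S by (auto simp: sysP_def intro: continuous_on_Pair)
    have "(M1 p, M2 p) = u p" using un[OF mc] sys_fix[OF cs S] p by blast
    thus "M1 p = fst (u p)" "M2 p = snd (u p)" by (auto simp: prod_eq_iff)
  qed
qed

end

lemma deriv_cont_on:
  assumes "\<forall>x\<in>{-1..1}. (f has_real_derivative f' x) (at x within {-1..1})"
  shows "continuous_on {-1..1::real} f"
  using assms by (auto simp: continuous_on_eq_continuous_within intro: DERIV_continuous)

theorem theorem1:
  fixes lam lam' mu mu' b c :: "real \<Rightarrow> real"
  assumes lam_pos: "\<forall>x\<in>{-1..1}. lam x > 0"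
    and mu_pos: "\<forall>x\<in>{-1..1}. mu x > 0"
    and lam_deriv: "\<forall>x\<in>{-1..1}. (lam has_real_derivative lam' x) (at x within {-1..1})"
    and lam'_cont: "continuous_on {-1..1} lam'"
    and mu_deriv: "\<forall>x\<in>{-1..1}. (mu has_real_derivative mu' x) (at x within {-1..1})"
    and mu'_cont: "continuous_on {-1..1} mu'"
    and lam_mu: "\<forall>w\<in>{-1..1}. lam w = mu (-w)"
    and b_cont: "continuous_on {-1..1} b"
    and c_cont: "continuous_on {-1..1} c"
  shows "\<exists>L11 L12 L21 L22.
           kernel_system lam lam' mu mu' b c L11 L12 L21 L22 \<and>
           (\<forall>M11 M12 M21 M22. kernel_system lam lam' mu mu' b c M11 M12 M21 M22 \<longrightarrow>
              (\<forall>p\<in>E_dom. M11 p = L11 p \<and> M12 p = L12 p \<and> M21 p = L21 p \<and> M22 p = L22 p))"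
proof -
  have lc: "continuous_on {-1..1} lam" by (rule deriv_cont_on[OF lam_deriv])
  have mc: "continuous_on {-1..1} mu" by (rule deriv_cont_on[OF mu_deriv])
  interpret s1: setting lam mu using lam_pos lc lam_mu by unfold_locales auto
  have ml: "\<forall>w\<in>{-1..1}. mu w = lam (-w)"
  proof
    fix w :: real assume "w \<in> {-1..1}"
    hence "-w \<in> {-1..1}" by auto
    thus "mu w = lam (-w)" using lam_mu by force
  qed
  interpret s2: setting mu lam using mu_pos mc ml by unfold_locales auto
  have den: "continuous_on {-1..1} (\<lambda>w. lam w + mu w)" using lc mc by (intro continuous_intros)
  have den0: "\<forall>w\<in>{-1..1}. lam w + mu w \<noteq> 0" using lam_pos mu_pos by (metis add_pos_pos less_irrefl)
  have h1c: "continuous_on {-1..1} (\<lambda>w. b w / (lam w + mu w))"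
    using b_cont lc mc den0 by (intro continuous_intros) auto
  have h2c: "continuous_on {-1..1} (\<lambda>w. - c w / (lam w + mu w))"
    using c_cont lc mc den0 by (intro continuous_intros) auto
  have c1: "continuous_on {-1..1} (\<lambda>x. - lam' x)" "continuous_on {-1..1} (\<lambda>x. - c x)"
    "continuous_on {-1..1} (\<lambda>x. - b x)" "continuous_on {-1..1} (\<lambda>x. - mu' x)"
    using lam'_cont c_cont b_cont mu'_cont by (auto intro: continuous_intros)
  obtain L1 L2 where L: "s1.sysP (\<lambda>x. - lam' x) (\<lambda>x. - c x) (\<lambda>x. - b x) mu' (\<lambda>w. b w / (lam w + mu w)) L1 L2"
    and Lu: "\<And>M1 M2. s1.sysP (\<lambda>x. - lam' x) (\<lambda>x. - c x) (\<lambda>x. - b x) mu' (\<lambda>w. b w / (lam w + mu w)) M1 M2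
       \<Longrightarrow> \<forall>p\<in>E_dom. M1 p = L1 p \<and> M2 p = L2 p"
    using s1.sys_main[OF c1(1) c1(2) c1(3) mu'_cont h1c] by blast
  obtain K1 K2 where K: "s2.sysP (\<lambda>x. - mu' x) b c lam' (\<lambda>w. - c w / (lam w + mu w)) K1 K2"
    and Ku: "\<And>M1 M2. s2.sysP (\<lambda>x. - mu' x) b c lam' (\<lambda>w. - c w / (lam w + mu w)) M1 M2
       \<Longrightarrow> \<forall>p\<in>E_dom. M1 p = K1 p \<and> M2 p = K2 p"
    using s2.sys_main[OF c1(4) b_cont c_cont lam'_cont h2c] by blast
  have e1: "(\<lambda>p. - lam' (fst p) * X p + - c (fst p) * Y p) = (\<lambda>p. - lam' (fst p) * X p - c (fst p) * Y p)"
    and e2: "(\<lambda>p. - b (fst p) * X p + mu' (fst p) * Y p) = (\<lambda>p. - b (fst p) * X p + mu' (fst p) * Y p)"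
    and e3: "(\<lambda>p. - mu' (fst p) * Y p + b (fst p) * X p) = (\<lambda>p. b (fst p) * X p - mu' (fst p) * Y p)"
    and e4: "(\<lambda>p. c (fst p) * Y p + lam' (fst p) * X p) = (\<lambda>p. lam' (fst p) * X p + c (fst p) * Y p)"
    for X Y :: "real \<times> real \<Rightarrow> real"
    by (auto simp: algebra_simps)
  have iff: "kernel_system lam lam' mu mu' b c X11 X12 X21 X22 \<longleftrightarrow>
     s1.sysP (\<lambda>x. - lam' x) (\<lambda>x. - c x) (\<lambda>x. - b x) mu' (\<lambda>w. b w / (lam w + mu w)) X11 X12 \<and>
     s2.sysP (\<lambda>x. - mu' x) b c lam' (\<lambda>w. - c w / (lam w + mu w)) X22 X21" for X11 X12 X21 X22
    unfolding kernel_system_def s1.sysP_def s2.sysP_def e1 e3 e4 by auto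
  show ?thesis
  proof (intro exI conjI allI impI ballI)
    show "kernel_system lam lam' mu mu' b c L1 L2 K2 K1" using L K iff by blast
    fix M11 M12 M21 M22 p assume M: "kernel_system lam lam' mu mu' b c M11 M12 M21 M22" and p: "p \<in> E_dom"
    have "M11 p = L1 p \<and> M12 p = L2 p" using Lu M iff p by blast
    moreover have "M22 p = K1 p \<and> M21 p = K2 p" using Ku M iff p by blast
    ultimately show "M11 p = L1 p" "M12 p = L2 p" "M21 p = K2 p" "M22 p = K1 p" by auto
  qed
qed


end
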